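(* In the Byblos protocol described in the context, if two correct servers both apply to their logs two conflicting, non-cancelled transactions $T_1$ and $T_2$, then they apply them in the same order.
   Context: Byblos protocol. There are $n=4f+1$ servers, at most $f$ Byzantine, the rest correct. Clients are not Byzantine (may crash). Messages between correct parties are eventually delivered, FIFO, authenticated; client messages are signed and unforgeable. Each transaction declares a read set and a write set of keys of a key-value store; two transactions conflict if the write set of one intersects the read or write set of the other. A fixed total order $<$ on transactions (by hash of identifier) is used for tie-breaking. Each correct server keeps: integer $\mathit{clock}$ (initially $0$); sets $\mathit{proposed}[s]$ of pairs $(T,k)$ per server $s$; maps $\mathit{confirmed}[t]$, $\mathit{pending}[t]$ (initially empty); sets $\mathit{committed}$, $\mathit{cancelled}$, $\mathit{resolving}$, $\mathit{ConfirmWitness}[T]$, $\mathit{CancelWitness}[T]$; a $\mathit{log}$; a ledger state; timers $\mathit{timer}[t]$; a timeout constant $\delta$. Client with transaction $T$: broadcasts $\mathrm{Propose}(T)$; waits for $\mathrm{ProposeAck}(T,\cdot)$ from at least $n-f$ servers; sets $\hat t$ to $1$ plus the $(f+1)$-st largest received value (missing values count as $0$); broadcasts $\mathrm{Confirm}(T,\hat t)$; waits for $f+1$ identical $\mathrm{ResolveAck}(T,\mathit{code},\mathit{result})$ and returns $\mathit{result}$ if $\mathit{code}=\mathrm{COMMIT}$, else $\bot$. Correct server: (i) on $\mathrm{Propose}(T)$ from a client, adds $(T,\mathit{clock})$ to $\mathit{proposed}[\mathit{self}]$, sends $\mathrm{Proposed}(T,\mathit{clock})$ to all servers and $\mathrm{ProposeAck}(T,\mathit{clock})$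 to the client; (ii) on $\mathrm{Proposed}(T,k)$ from server $s$, adds $(T,k)$ to $\mathit{proposed}[s]$; (iii) on $\mathrm{Confirm}(T,\hat t)$ from a client or server $s$: $\mathit{clock}:=\max(\mathit{clock},\hat t)$, adds $T$ to $\mathit{confirmed}[\hat t]$, forwards the Confirm to all servers once, adds $s$ to $\mathit{ConfirmWitness}[T]$; if $\mathit{pending}[\hat t]=\emptyset$ and $|\mathit{ConfirmWitness}[T]|=n-f$, sets $\mathit{pending}[\hat t]$ to the set of $T'$ with $(T',k)\in\mathit{proposed}[s']$ for some $s'\in\mathit{ConfirmWitness}[T]$, $k\le\hat t$, and sets $\mathit{timer}[\hat t]$ to expire after $\delta$; if $T\notin\mathit{resolving}$, adds it and starts a resolution of $T$ with input COMMIT; (iv) on $\mathrm{StartResolution}(T,\mathit{code})$ from server $s$ with $T\notin\mathit{resolving}$: if COMMIT, adds $T$ to $\mathit{resolving}$ and starts a resolution with input COMMIT; if CANCEL, adds $s$ to $\mathit{CancelWitness}[T]$ and once it has $\ge f+1$ members, adds $T$ to $\mathit{resolving}$ and starts a resolution with input CANCEL; (v) when $\mathit{timer}[t]$ expires, starts a resolution with input CANCEL for each $T'\in\mathit{pending}[t]$ not in $\mathit{resolving}$ (adding it). A resolution of $T$ sends $\mathrm{StartResolution}(T,\mathit{code})$ to all servers and runs a binary Byzantine consensus instance for $T$ (input $1$ for COMMIT, $0$ for CANCEL) satisfying agreement and validity, and terminating in periods of synchrony; decision $1$ adds $T$ to $\mathit{committed}$, decision $0$ to $\mathit{cancelled}$.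 Apply rule: $\mathrm{OrderBefore}(T,T')$ holds iff $T\in\mathit{confirmed}[t]$ and either $T'\in\mathit{confirmed}[t']$ with $t<t'$, or $T'\in\mathit{confirmed}[t]$ and $T<T'$. The server appends $T$ to its log, applies it to the state, and sends $\mathrm{ResolveAck}(T,\mathrm{COMMIT},\mathit{result})$ to its client when $T\in\mathit{committed}\cap\mathit{confirmed}[t]$, $\mathit{pending}[t]\neq\emptyset$, and every $T'\in\mathit{pending}[t]$ either does not conflict with $T$, is in $\mathit{cancelled}$, is in the log, or satisfies $\mathrm{OrderBefore}(T,T')$. A transaction in $\mathit{cancelled}$ not in the log is appended (without being applied) and $\mathrm{ResolveAck}(T,\mathrm{CANCEL},\bot)$ is sent. *)

theory Defs
  imports Main "HOL-Library.Multiset"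
begin

text \<open>Transactions have type 'tx, ordered by a fixed total order (the hash order);
servers have a finite type 's (n = card (UNIV :: 's set)); keys have type 'k.\<close>

definition conflict :: "('tx \<Rightarrow> 'k set) \<Rightarrow> ('tx \<Rightarrow> 'k set) \<Rightarrow> 'tx \<Rightarrow> 'tx \<Rightarrow> bool" where
  "conflict rs ws T T' \<longleftrightarrow> T \<noteq> T' \<and>
     (ws T \<inter> (rs T' \<union> ws T') \<noteq> {} \<or> ws T' \<inter> (rs T \<union> ws T) \<noteq> {})"

datatype code = COMMIT | CANCEL

datatype 'tx msg =
    Propose 'tx
  | ProposeAck 'tx nat
  | Proposed 'tx nat
  | Confirm 'tx nat
  | StartResolution 'tx code

text \<open>Network nodes: servers, and the (non-Byzantine, possibly crashing) client
issuing a given transaction.\<close>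
datatype ('s, 'tx) node = Srv 's | Cli 'tx

record ('s, 'tx) sstate =
  clock :: nat
  proposed :: "'s \<Rightarrow> ('tx \<times> nat) set"
  confirmed :: "nat \<Rightarrow> 'tx set"
  pending :: "nat \<Rightarrow> 'tx set"
  committed :: "'tx set"
  cancelled :: "'tx set"
  resolving :: "'tx set"
  ConfirmWitness :: "'tx \<Rightarrow> 's set"
  CancelWitness :: "'tx \<Rightarrow> 's set"
  forwarded :: "('tx \<times> nat) set"
  log :: "('tx \<times> bool) list"   \<comment> \<open>True: applied (committed); False: appended as cancelled\<close>
  timers :: "nat set"           \<comment> \<open>timestamps t whose timer[t] is armed and not yet expired\<close>

definition sinit :: "('s, 'tx) sstate" where
  "sinit = \<lparr> clock = 0, proposed = (\<lambda>_. {}), confirmed = (\<lambda>_. {}), pending = (\<lambda>_. {}),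
     committed = {}, cancelled = {}, resolving = {}, ConfirmWitness = (\<lambda>_. {}),
     CancelWitness = (\<lambda>_. {}), forwarded = {}, log = [], timers = {} \<rparr>"

datatype 's cphase = CIdle | CWait "'s \<Rightarrow> nat option" | CDone | CCrashed

type_synonym ('s, 'tx) outs = "('s, 'tx) node \<Rightarrow> 'tx msg list"

definition no_out :: "('s, 'tx) outs" where "no_out = (\<lambda>_. [])"

definition to_servers :: "'tx msg list \<Rightarrow> ('s, 'tx) outs" where
  "to_servers ms = (\<lambda>d. case d of Srv _ \<Rightarrow> ms | Cli _ \<Rightarrow> [])"

text \<open>Handlers of a correct server. They return the new local state, the messages sent
(per destination, in order), and the consensus inputs started (resolutions).\<close>

definition on_propose :: "'s \<Rightarrow> ('s, 'tx) node \<Rightarrow> 'tx \<Rightarrow> ('s, 'tx) sstate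
    \<Rightarrow> ('s, 'tx) sstate \<times> ('s, 'tx) outs \<times> ('tx \<times> code) list" where
  "on_propose self x T st =
    (st\<lparr>proposed := (proposed st)(self := insert (T, clock st) (proposed st self))\<rparr>,
     (\<lambda>d. if d = x then [ProposeAck T (clock st)]
          else case d of Srv _ \<Rightarrow> [Proposed T (clock st)] | Cli _ \<Rightarrow> []),
     [])"

definition on_proposed :: "'s \<Rightarrow> 'tx \<Rightarrow> nat \<Rightarrow> ('s, 'tx) sstate
    \<Rightarrow> ('s, 'tx) sstate \<times> ('s, 'tx) outs \<times> ('tx \<times> code) list" where
  "on_proposed s' T k st =
    (st\<lparr>proposed := (proposed st)(s' := insert (T, k) (proposed st s'))\<rparr>, no_out, [])"

text \<open>q is the quorum size n - f.\<close>
definition on_confirm :: "nat \<Rightarrow> ('s, 'tx) node \<Rightarrow> 'tx \<Rightarrow> nat \<Rightarrow> ('s, 'tx) sstate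
    \<Rightarrow> ('s, 'tx) sstate \<times> ('s, 'tx) outs \<times> ('tx \<times> code) list" where
  "on_confirm q x T t st =
    (let st1 = st\<lparr>clock := max (clock st) t,
                  confirmed := (confirmed st)(t := insert T (confirmed st t))\<rparr>;
         fwd = (if (T, t) \<in> forwarded st1 then [] else [Confirm T t]);
         st2 = st1\<lparr>forwarded := insert (T, t) (forwarded st1)\<rparr>;
         st3 = (case x of
                  Srv s' \<Rightarrow> st2\<lparr>ConfirmWitness := (ConfirmWitness st2)(T := insert s' (ConfirmWitness st2 T))\<rparr>
                | Cli _ \<Rightarrow> st2);
         st4 = (if pending st3 t = {} \<and> card (ConfirmWitness st3 T) = q
                then st3\<lparr>pending := (pending st3)(t :=
                          {T'. \<exists>s'\<in>ConfirmWitness st3 T. \<exists>k\<le>t. (T', k) \<in> proposed st3 s'}),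
                         timers := insert t (timers st3)\<rparr>
                else st3)
     in if T \<in> resolving st4
        then (st4, to_servers fwd, [])
        else (st4\<lparr>resolving := insert T (resolving st4)\<rparr>,
              to_servers (fwd @ [StartResolution T COMMIT]), [(T, COMMIT)]))"

definition on_startres :: "nat \<Rightarrow> 's \<Rightarrow> 'tx \<Rightarrow> code \<Rightarrow> ('s, 'tx) sstate
    \<Rightarrow> ('s, 'tx) sstate \<times> ('s, 'tx) outs \<times> ('tx \<times> code) list" where
  "on_startres f s' T c st =
    (if T \<in> resolving st then (st, no_out, [])
     else (case c of
       COMMIT \<Rightarrow> (st\<lparr>resolving := insert T (resolving st)\<rparr>,
                  to_servers [StartResolution T COMMIT], [(T, COMMIT)])
     | CANCEL \<Rightarrow>
         (let st1 = st\<lparr>CancelWitness := (CancelWitness st)(T := insert s' (CancelWitness st T))\<rparr>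
          in if card (CancelWitness st1 T) \<ge> f + 1
             then (st1\<lparr>resolving := insert T (resolving st1)\<rparr>,
                   to_servers [StartResolution T CANCEL], [(T, CANCEL)])
             else (st1, no_out, []))))"

definition handle :: "nat \<Rightarrow> nat \<Rightarrow> 's \<Rightarrow> ('s, 'tx) node \<Rightarrow> 'tx msg \<Rightarrow> ('s, 'tx) sstate
    \<Rightarrow> ('s, 'tx) sstate \<times> ('s, 'tx) outs \<times> ('tx \<times> code) list" where
  "handle f q self x m st =
    (case m of
       Propose T \<Rightarrow> (case x of Cli _ \<Rightarrow> on_propose self x T st | Srv _ \<Rightarrow> (st, no_out, []))
     | Proposed T k \<Rightarrow> (case x of Srv s' \<Rightarrow> on_proposed s' T k st | Cli _ \<Rightarrow> (st, no_out, []))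
     | Confirm T t \<Rightarrow> on_confirm q x T t st
     | StartResolution T c \<Rightarrow> (case x of Srv s' \<Rightarrow> on_startres f s' T c st | Cli _ \<Rightarrow> (st, no_out, []))
     | ProposeAck _ _ \<Rightarrow> (st, no_out, []))"

definition order_before :: "('s, 'tx::linorder) sstate \<Rightarrow> 'tx \<Rightarrow> 'tx \<Rightarrow> bool" where
  "order_before st T T' \<longleftrightarrow> (\<exists>t. T \<in> confirmed st t \<and>
      ((\<exists>t'. T' \<in> confirmed st t' \<and> t < t') \<or> (T' \<in> confirmed st t \<and> T < T')))"

text \<open>The (f+1)-st largest of the values v s over all n servers (missing values given as 0).\<close>
definition kth_largest :: "nat \<Rightarrow> ('s::finite \<Rightarrow> nat) \<Rightarrow> nat" where
  "kth_largest f v = rev (sorted_list_of_multiset (image_mset v (mset_set (UNIV :: 's set)))) ! f"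

record ('s, 'tx) gstate =
  srv :: "'s \<Rightarrow> ('s, 'tx) sstate"
  cli :: "'tx \<Rightarrow> 's cphase"
  chan :: "('s, 'tx) node \<Rightarrow> ('s, 'tx) node \<Rightarrow> 'tx msg list"  \<comment> \<open>FIFO channel from sender to receiver\<close>
  cinput :: "'tx \<Rightarrow> code set"        \<comment> \<open>inputs of correct servers to the consensus instance for T\<close>
  decision :: "'tx \<Rightarrow> code option"    \<comment> \<open>value decided by the consensus instance for T\<close>
  signed :: "('tx \<times> nat) set"        \<comment> \<open>Confirm(T,t) messages signed by clients\<close>

definition ginit :: "('s, 'tx) gstate" where
  "ginit = \<lparr> srv = (\<lambda>_. sinit), cli = (\<lambda>_. CIdle), chan = (\<lambda>_ _. []),
            cinput = (\<lambda>_. {}), decision = (\<lambda>_. None), signed = {} \<rparr>"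

definition srv_step :: "('s, 'tx) gstate \<Rightarrow> 's \<Rightarrow> ('s, 'tx) sstate \<Rightarrow> ('s, 'tx) outs
     \<Rightarrow> ('tx \<times> code) list \<Rightarrow> ('s, 'tx) node \<Rightarrow> 'tx msg list \<Rightarrow> ('s, 'tx) gstate" where
  "srv_step g s st' outs ins x rest =
    (let c1 = (chan g)(x := (chan g x)(Srv s := rest))
     in g\<lparr>srv := (srv g)(s := st'),
          chan := c1(Srv s := (\<lambda>y. c1 (Srv s) y @ outs y)),
          cinput := (\<lambda>T. cinput g T \<union> {c. (T, c) \<in> set ins})\<rparr>)"

definition client_send :: "('s, 'tx) gstate \<Rightarrow> 'tx \<Rightarrow> 's set \<Rightarrow> 'tx msg
     \<Rightarrow> ('s, 'tx) node \<Rightarrow> ('s, 'tx) node \<Rightarrow> 'tx msg list" where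
  "client_send g T S m =
    (chan g)(Cli T := (\<lambda>y. case y of Srv d \<Rightarrow> if d \<in> S then chan g (Cli T) y @ [m] else chan g (Cli T) y
                                  | Cli _ \<Rightarrow> chan g (Cli T) y))"

inductive step :: "nat \<Rightarrow> 's::finite set \<Rightarrow> ('tx::linorder \<Rightarrow> 'k set) \<Rightarrow> ('tx \<Rightarrow> 'k set)
    \<Rightarrow> ('s, 'tx) gstate \<Rightarrow> ('s, 'tx) gstate \<Rightarrow> bool"
  for f Byz rs ws where
  recv: "\<lbrakk> s \<notin> Byz; chan g x (Srv s) = m # rest;
           handle f (card (UNIV :: 's set) - f) s x m (srv g s) = (st', outs, ins) \<rbrakk>
         \<Longrightarrow> step f Byz rs ws g (srv_step g s st' outs ins x rest)"
  \<comment> \<open>expiry of timer[t] (asynchrony: at an arbitrary moment after it was set)\<close>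
| timer: "\<lbrakk> s \<notin> Byz; t \<in> timers (srv g s); distinct ts;
            set ts = pending (srv g s) t - resolving (srv g s) \<rbrakk>
         \<Longrightarrow> step f Byz rs ws g
               (g\<lparr>srv := (srv g)(s := (srv g s)\<lparr>timers := timers (srv g s) - {t},
                                              resolving := resolving (srv g s) \<union> set ts\<rparr>),
                  chan := (chan g)(Srv s := (\<lambda>y. chan g (Srv s) y @
                              to_servers (map (\<lambda>T. StartResolution T CANCEL) ts) y)),
                  cinput := (\<lambda>T. if T \<in> set ts then insert CANCEL (cinput g T) else cinput g T)\<rparr>)"
  \<comment> \<open>a correct server decides in the binary consensus instance for T
      (agreement: single decision value; validity: the value was input by a correct server)\<close>
| decide: "\<lbrakk> s \<notin> Byz; T \<in> resolving (srv g s); T \<notin> committed (srv g s); T \<notin> cancelled (srv g s);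
             c \<in> cinput g T; decision g T = None \<or> decision g T = Some c \<rbrakk>
         \<Longrightarrow> step f Byz rs ws g
               (g\<lparr>srv := (srv g)(s := (if c = COMMIT
                     then (srv g s)\<lparr>committed := insert T (committed (srv g s))\<rparr>
                     else (srv g s)\<lparr>cancelled := insert T (cancelled (srv g s))\<rparr>)),
                  decision := (decision g)(T := Some c)\<rparr>)"
| apply_tx: "\<lbrakk> s \<notin> Byz; T \<in> committed (srv g s); T \<in> confirmed (srv g s) t;
              T \<notin> fst ` set (log (srv g s)); pending (srv g s) t \<noteq> {};
              \<forall>T' \<in> pending (srv g s) t. \<not> conflict rs ws T T' \<or> T' \<in> cancelled (srv g s)
                   \<or> T' \<in> fst ` set (log (srv g s)) \<or> order_before (srv g s) T T' \<rbrakk>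
         \<Longrightarrow> step f Byz rs ws g
               (g\<lparr>srv := (srv g)(s := (srv g s)\<lparr>log := log (srv g s) @ [(T, True)]\<rparr>)\<rparr>)"
| cancel_tx: "\<lbrakk> s \<notin> Byz; T \<in> cancelled (srv g s); T \<notin> fst ` set (log (srv g s)) \<rbrakk>
         \<Longrightarrow> step f Byz rs ws g
               (g\<lparr>srv := (srv g)(s := (srv g s)\<lparr>log := log (srv g s) @ [(T, False)]\<rparr>)\<rparr>)"
  \<comment> \<open>a Byzantine server sends an arbitrary message, but cannot forge client signatures\<close>
| byz: "\<lbrakk> b \<in> Byz; \<forall>T t. m = Confirm T t \<longrightarrow> (T, t) \<in> signed g \<rbrakk>
         \<Longrightarrow> step f Byz rs ws g
               (g\<lparr>chan := (chan g)(Srv b := (chan g (Srv b))(y := chan g (Srv b) y @ [m]))\<rparr>)"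
  \<comment> \<open>client of T broadcasts Propose(T); if it crashes during the broadcast only a subset S receives it\<close>
| cli_propose: "\<lbrakk> cli g T = CIdle \<rbrakk>
         \<Longrightarrow> step f Byz rs ws g
               (g\<lparr>chan := client_send g T S (Propose T),
                  cli := (cli g)(T := (if S = UNIV then CWait (\<lambda>_. None) else CCrashed))\<rparr>)"
| cli_recv: "\<lbrakk> chan g x (Cli T) = m # rest;
               ph' = (case (cli g T, m, x) of
                        (CWait acks, ProposeAck T' k, Srv s) \<Rightarrow>
                           if T' = T \<and> acks s = None then CWait (acks(s := Some k)) else CWait acks
                      | (ph, _, _) \<Rightarrow> ph) \<rbrakk>
         \<Longrightarrow> step f Byz rs ws g
               (g\<lparr>chan := (chan g)(x := (chan g x)(Cli T := rest)),
                  cli := (cli g)(T := ph')\<rparr>)"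
| cli_confirm: "\<lbrakk> cli g T = CWait acks; card {s. acks s \<noteq> None} \<ge> card (UNIV :: 's set) - f;
                  th = 1 + kth_largest f (\<lambda>s. case acks s of None \<Rightarrow> 0 | Some k \<Rightarrow> k) \<rbrakk>
         \<Longrightarrow> step f Byz rs ws g
               (g\<lparr>chan := client_send g T S (Confirm T th),
                  cli := (cli g)(T := (if S = UNIV then CDone else CCrashed)),
                  signed := insert (T, th) (signed g)\<rparr>)"
| cli_crash: "step f Byz rs ws g (g\<lparr>cli := (cli g)(T := CCrashed)\<rparr>)"

inductive_set reach :: "nat \<Rightarrow> 's::finite set \<Rightarrow> ('tx::linorder \<Rightarrow> 'k set) \<Rightarrow> ('tx \<Rightarrow> 'k set)
    \<Rightarrow> ('s, 'tx) gstate set"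
  for f Byz rs ws where
  init: "ginit \<in> reach f Byz rs ws"
| step: "\<lbrakk> g \<in> reach f Byz rs ws; step f Byz rs ws g g' \<rbrakk> \<Longrightarrow> g' \<in> reach f Byz rs ws"

definition applied :: "('tx \<times> bool) list \<Rightarrow> 'tx \<Rightarrow> bool" where
  "applied L T \<longleftrightarrow> (T, True) \<in> set L"

definition applied_before :: "('tx \<times> bool) list \<Rightarrow> 'tx \<Rightarrow> 'tx \<Rightarrow> bool" where
  "applied_before L T1 T2 \<longleftrightarrow>
     (\<exists>i j. i < j \<and> j < length L \<and> L ! i = (T1, True) \<and> L ! j = (T2, True))"

end

theory Submission
  imports Defs
begin


lemma sorted_desc_nth:
  fixes xs :: "nat list"
  assumes "sorted_wrt (\<ge>) xs" "length (filter (\<lambda>x. t \<le> x) xs) \<ge> Suc f"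
  shows "f < length xs \<and> t \<le> xs ! f"
proof (rule ccontr)
  assume c: "\<not> (f < length xs \<and> t \<le> xs ! f)"
  have d: "\<forall>x \<in> set (drop f xs). x < t"
  proof
    fix x assume "x \<in> set (drop f xs)"
    then obtain j where j: "j < length (drop f xs)" "x = drop f xs ! j" by (metis in_set_conv_nth)
    then have x: "x = xs ! (f + j)" "f + j < length xs" by auto
    show "x < t"
    proof (cases "j = 0")
      case True then show ?thesis using c x by auto
    next
      case False
      then have "xs ! (f+j) \<le> xs ! f" using assms(1) x(2) by (simp add: sorted_wrt_iff_nth_less)
      then show ?thesis using c x by auto
    qed
  qed
  have "xs = take f xs @ drop f xs" by simp
  then have "filter (\<lambda>x. t \<le> x) xs = filter (\<lambda>x. t \<le> x) (take f xs)"
    using d by (metis append_Nil2 filter_False filter_append not_le)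
  then have "length (filter (\<lambda>x. t \<le> x) xs) \<le> f"
    by (metis length_filter_le length_take min.bounded_iff nat_le_linear)
  then show False using assms(2) by simp
qed

lemma kth_ge:
  fixes v :: "'s::finite \<Rightarrow> nat"
  assumes "card {s. t \<le> v s} \<ge> Suc f"
  shows "t \<le> kth_largest f v"
proof -
  let ?M = "image_mset v (mset_set (UNIV :: 's set))"
  let ?xs = "rev (sorted_list_of_multiset ?M)"
  have s: "sorted_wrt (\<ge>) ?xs" by (simp add: sorted_wrt_rev)
  have "mset ?xs = ?M" by simp
  then have "length (filter (\<lambda>x. t \<le> x) ?xs) = size (filter_mset (\<lambda>x. t \<le> x) ?M)"
    by (metis mset_filter size_mset)
  also have "filter_mset (\<lambda>x. t \<le> x) ?M = image_mset v (filter_mset (\<lambda>s. t \<le> v s) (mset_set UNIV))"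
    by (simp add: filter_mset_image_mset)
  also have "size \<dots> = card {s. t \<le> v s}" by simp
  finally have "length (filter (\<lambda>x. t \<le> x) ?xs) \<ge> Suc f" using assms by simp
  then show ?thesis using sorted_desc_nth[OF s] unfolding kth_largest_def by blast
qed


lemma quorum:
  fixes W A Byz :: "'s::finite set"
  assumes "card (UNIV :: 's set) = 4 * f + 1" "card Byz \<le> f"
    "card W \<ge> card (UNIV :: 's set) - f" "card A \<ge> card (UNIV :: 's set) - f"
  shows "Suc f \<le> card (W \<inter> A - Byz)"
proof -
  have "card (W \<union> A) \<le> card (UNIV :: 's set)" by (rule card_mono) simp_all
  moreover have "card W + card A = card (W \<union> A) + card (W \<inter> A)" by (rule card_Un_Int) simp_all
  ultimately have "card (W \<inter> A) \<ge> 2 * f + 1" using assms by linarith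
  moreover have "card (W \<inter> A - Byz) \<ge> card (W \<inter> A) - card Byz" by (rule diff_card_le_card_Diff) simp
  ultimately show ?thesis using assms by linarith
qed

definition ok_acks :: "nat \<Rightarrow> 's::finite set \<Rightarrow> ('s, 'tx) gstate \<Rightarrow> 'tx \<Rightarrow> ('s \<Rightarrow> nat option) \<Rightarrow> bool" where
  "ok_acks f Byz g T acks \<longleftrightarrow> (\<forall>s k. s \<notin> Byz \<longrightarrow> acks s = Some k \<longrightarrow> (T, k) \<in> proposed (srv g s) s)"

definition inv_sig :: "nat \<Rightarrow> 's::finite set \<Rightarrow> ('s, 'tx) gstate \<Rightarrow> bool" where
  "inv_sig f Byz g \<longleftrightarrow>
    (\<forall>T t t'. (T, t) \<in> signed g \<longrightarrow> (T, t') \<in> signed g \<longrightarrow> t = t') \<and>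
    (\<forall>T t. (T, t) \<in> signed g \<longrightarrow> cli g T = CDone \<or> cli g T = CCrashed) \<and>
    (\<forall>T t. (T, t) \<in> signed g \<longrightarrow> (\<exists>acks. card {s. acks s \<noteq> None} \<ge> card (UNIV :: 's set) - f \<and>
        t = 1 + kth_largest f (\<lambda>s. case acks s of None \<Rightarrow> 0 | Some k \<Rightarrow> k) \<and> ok_acks f Byz g T acks)) \<and>
    (\<forall>T acks. cli g T = CWait acks \<longrightarrow> ok_acks f Byz g T acks) \<and>
    (\<forall>s T T' k. s \<notin> Byz \<longrightarrow> ProposeAck T k \<in> set (chan g (Srv s) (Cli T')) \<longrightarrow> (T, k) \<in> proposed (srv g s) s) \<and>
    (\<forall>s d T k. s \<notin> Byz \<longrightarrow> Proposed T k \<in> set (chan g (Srv s) d) \<longrightarrow> (T, k) \<in> proposed (srv g s) s)"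

definition inv_conf :: "'s set \<Rightarrow> ('s, 'tx) gstate \<Rightarrow> bool" where
  "inv_conf Byz g \<longleftrightarrow>
    (\<forall>x y T t. Confirm T t \<in> set (chan g x y) \<longrightarrow> (T, t) \<in> signed g) \<and>
    (\<forall>s T t. s \<notin> Byz \<longrightarrow> T \<in> confirmed (srv g s) t \<longrightarrow> (T, t) \<in> signed g) \<and>
    (\<forall>s T t. s \<notin> Byz \<longrightarrow> (T, t) \<in> forwarded (srv g s) \<longrightarrow> (T, t) \<in> signed g \<and> t \<le> clock (srv g s))"

definition chan_ok' :: "'tx msg list \<Rightarrow> ('tx \<times> nat) set \<Rightarrow> ('tx \<times> nat) set \<Rightarrow> ('tx \<times> nat) set \<Rightarrow> bool" where
  "chan_ok' ch P Pd F \<longleftrightarrow>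
     (\<forall>T2 k. (T2, k) \<in> P \<longrightarrow> (T2, k) \<in> Pd \<or> Proposed T2 k \<in> set ch) \<and>
     (\<forall>i T t. i < length ch \<longrightarrow> ch ! i = Confirm T t \<longrightarrow> (T, t) \<in> F \<and>
        (\<forall>T2 k. (T2, k) \<in> P \<longrightarrow> k < t \<longrightarrow> (T2, k) \<in> Pd \<or> Proposed T2 k \<in> set (take i ch)))"

definition chan_ok :: "('s, 'tx) gstate \<Rightarrow> 's \<Rightarrow> 's \<Rightarrow> bool" where
  "chan_ok g s d \<longleftrightarrow> chan_ok' (chan g (Srv s) (Srv d)) (proposed (srv g s) s) (proposed (srv g d) s) (forwarded (srv g s))"

definition inv_chan :: "'s set \<Rightarrow> ('s, 'tx) gstate \<Rightarrow> bool" where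
  "inv_chan Byz g \<longleftrightarrow> (\<forall>s d. s \<notin> Byz \<longrightarrow> d \<notin> Byz \<longrightarrow> chan_ok g s d)"

definition inv_cw :: "'s set \<Rightarrow> ('s, 'tx) gstate \<Rightarrow> bool" where
  "inv_cw Byz g \<longleftrightarrow> (\<forall>s a T. s \<notin> Byz \<longrightarrow> a \<notin> Byz \<longrightarrow> s \<in> ConfirmWitness (srv g a) T \<longrightarrow>
     (\<exists>t. (T, t) \<in> forwarded (srv g s) \<and>
        (\<forall>T2 k. (T2, k) \<in> proposed (srv g s) s \<longrightarrow> k < t \<longrightarrow> (T2, k) \<in> proposed (srv g a) s)))"

definition inv_pend :: "nat \<Rightarrow> 's::finite set \<Rightarrow> ('s, 'tx) gstate \<Rightarrow> bool" where
  "inv_pend f Byz g \<longleftrightarrow> (\<forall>a t. a \<notin> Byz \<longrightarrow> pending (srv g a) t \<noteq> {} \<longrightarrow>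
     (\<exists>W. card W \<ge> card (UNIV :: 's set) - f \<and> (\<forall>s\<in>W. s \<notin> Byz \<longrightarrow>
        (\<exists>T. (T, t) \<in> forwarded (srv g s)) \<and>
        (\<forall>T2 k. (T2, k) \<in> proposed (srv g s) s \<longrightarrow> k < t \<longrightarrow> T2 \<in> pending (srv g a) t))))"

definition lex_before :: "('s, 'tx::linorder) gstate \<Rightarrow> 'tx \<Rightarrow> 'tx \<Rightarrow> bool" where
  "lex_before g T1 T2 \<longleftrightarrow> (\<exists>t1 t2. (T1, t1) \<in> signed g \<and> (T2, t2) \<in> signed g \<and>
      (t1 < t2 \<or> (t1 = t2 \<and> T1 < T2)))"

definition quorum_late :: "nat \<Rightarrow> 's::finite set \<Rightarrow> ('s, 'tx) gstate \<Rightarrow> 'tx \<Rightarrow> 'tx \<Rightarrow> bool" where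
  "quorum_late f Byz g T1 T2 \<longleftrightarrow> (\<exists>t1 W. (T1, t1) \<in> signed g \<and> card W \<ge> card (UNIV :: 's set) - f \<and>
      (\<forall>s\<in>W. s \<notin> Byz \<longrightarrow> t1 \<le> clock (srv g s) \<and> (\<forall>k. (T2, k) \<in> proposed (srv g s) s \<longrightarrow> t1 \<le> k)))"

definition inv_log :: "nat \<Rightarrow> 's::finite set \<Rightarrow> ('tx::linorder \<Rightarrow> 'k set) \<Rightarrow> ('tx \<Rightarrow> 'k set) \<Rightarrow> ('s, 'tx) gstate \<Rightarrow> bool" where
  "inv_log f Byz rs ws g \<longleftrightarrow> (\<forall>a. a \<notin> Byz \<longrightarrow>
     distinct (map fst (log (srv g a))) \<and>
     (\<forall>T. (T, True) \<in> set (log (srv g a)) \<longrightarrow> (\<exists>t. T \<in> confirmed (srv g a) t)) \<and>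
     (\<forall>i T1 T2. i < length (log (srv g a)) \<longrightarrow> log (srv g a) ! i = (T1, True) \<longrightarrow> conflict rs ws T1 T2 \<longrightarrow>
        T2 \<in> fst ` set (take i (log (srv g a))) \<or> T2 \<in> cancelled (srv g a) \<or>
        lex_before g T1 T2 \<or> quorum_late f Byz g T1 T2))"

definition invs :: "nat \<Rightarrow> 's::finite set \<Rightarrow> ('tx::linorder \<Rightarrow> 'k set) \<Rightarrow> ('tx \<Rightarrow> 'k set) \<Rightarrow> ('s, 'tx) gstate \<Rightarrow> bool" where
  "invs f Byz rs ws g \<longleftrightarrow> inv_sig f Byz g \<and> inv_conf Byz g \<and> inv_chan Byz g \<and> inv_cw Byz g \<and>
     inv_pend f Byz g \<and> inv_log f Byz rs ws g"


lemma conflict_sym: "conflict rs ws T1 T2 \<Longrightarrow> conflict rs ws T2 T1"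
  unfolding conflict_def by blast

lemma late_imp:
  assumes "invs f Byz rs ws g" "card (UNIV :: 's::finite set) = 4 * f + 1" "card (Byz :: 's set) \<le> f"
    "quorum_late f Byz g T1 T2" "(T2, t2) \<in> signed g" "(T1, t1) \<in> signed g"
  shows "t1 < t2"
proof -
  have sig: "inv_sig f Byz g" using assms(1) unfolding invs_def by simp
  obtain t1' W where W: "(T1, t1') \<in> signed g" "card W \<ge> card (UNIV :: 's set) - f"
    "\<forall>s\<in>W. s \<notin> Byz \<longrightarrow> t1' \<le> clock (srv g s) \<and> (\<forall>k. (T2, k) \<in> proposed (srv g s) s \<longrightarrow> t1' \<le> k)"
    using assms(4) unfolding quorum_late_def by blast
  have "t1' = t1" using sig W(1) assms(6) unfolding inv_sig_def by blast
  obtain acks where A: "card {s. acks s \<noteq> None} \<ge> card (UNIV :: 's set) - f"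
    "t2 = 1 + kth_largest f (\<lambda>s. case acks s of None \<Rightarrow> 0 | Some k \<Rightarrow> k)" "ok_acks f Byz g T2 acks"
    using sig assms(5) unfolding inv_sig_def by blast
  have q: "Suc f \<le> card (W \<inter> {s. acks s \<noteq> None} - Byz)"
    by (rule quorum[OF assms(2) assms(3) W(2) A(1)])
  have "W \<inter> {s. acks s \<noteq> None} - Byz \<subseteq> {s. t1 \<le> (case acks s of None \<Rightarrow> 0 | Some k \<Rightarrow> k)}"
  proof
    fix s assume s: "s \<in> W \<inter> {s. acks s \<noteq> None} - Byz"
    then obtain k where k: "acks s = Some k" by auto
    then have "(T2, k) \<in> proposed (srv g s) s" using A(3) s unfolding ok_acks_def by blast
    then have "t1 \<le> k" using W(3) s \<open>t1' = t1\<close> by blast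
    then show "s \<in> {s. t1 \<le> (case acks s of None \<Rightarrow> 0 | Some k \<Rightarrow> k)}" using k by simp
  qed
  then have "card (W \<inter> {s. acks s \<noteq> None} - Byz) \<le> card {s. t1 \<le> (case acks s of None \<Rightarrow> 0 | Some k \<Rightarrow> k)}"
    by (rule card_mono[rotated]) simp
  then have "t1 \<le> kth_largest f (\<lambda>s. case acks s of None \<Rightarrow> 0 | Some k \<Rightarrow> k)"
    using q by (intro kth_ge) linarith
  then show ?thesis using A(2) by simp
qed

lemma not_in_take:
  assumes "distinct (map fst L)" "i < j" "j < length L" "fst (L ! j) = T"
  shows "T \<notin> fst ` set (take i L)"
proof
  assume "T \<in> fst ` set (take i L)"
  then obtain m where m: "m < length (take i L)" "fst (take i L ! m) = T"
    by (metis imageE in_set_conv_nth)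
  then have "m < i" "map fst L ! m = map fst L ! j" using assms by auto
  then show False using assms nth_eq_iff_index_eq[OF assms(1), of m j] by auto
qed

lemma inv_logD:
  assumes "inv_log f Byz rs ws g" "a \<notin> Byz"
  shows "distinct (map fst (log (srv g a)))"
    "\<And>T. (T, True) \<in> set (log (srv g a)) \<Longrightarrow> \<exists>t. T \<in> confirmed (srv g a) t"
    "\<And>i T1 T2. i < length (log (srv g a)) \<Longrightarrow> log (srv g a) ! i = (T1, True) \<Longrightarrow> conflict rs ws T1 T2 \<Longrightarrow>
        T2 \<in> fst ` set (take i (log (srv g a))) \<or> T2 \<in> cancelled (srv g a) \<or>
        lex_before g T1 T2 \<or> quorum_late f Byz g T1 T2"
  using assms unfolding inv_log_def by blast+

lemma inv_confD:
  assumes "inv_conf Byz g"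
  shows "\<And>x y T t. Confirm T t \<in> set (chan g x y) \<Longrightarrow> (T, t) \<in> signed g"
    "\<And>s T t. s \<notin> Byz \<Longrightarrow> T \<in> confirmed (srv g s) t \<Longrightarrow> (T, t) \<in> signed g"
    "\<And>s T t. s \<notin> Byz \<Longrightarrow> (T, t) \<in> forwarded (srv g s) \<Longrightarrow> (T, t) \<in> signed g"
    "\<And>s T t. s \<notin> Byz \<Longrightarrow> (T, t) \<in> forwarded (srv g s) \<Longrightarrow> t \<le> clock (srv g s)"
  using assms unfolding inv_conf_def by blast+

lemma applied_order:
  assumes "invs f Byz rs ws g" "card (UNIV :: 's::finite set) = 4 * f + 1" "card (Byz :: 's set) \<le> f"
    "a \<notin> Byz" "conflict rs ws T1 T2" "T2 \<notin> cancelled (srv g a)"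
    "applied_before (log (srv g a)) T1 T2"
  shows "\<exists>t1 t2. (T1, t1) \<in> signed g \<and> (T2, t2) \<in> signed g \<and> (t1 < t2 \<or> (t1 = t2 \<and> T1 < T2))"
proof -
  let ?L = "log (srv g a)"
  obtain i j where ij: "i < j" "j < length ?L" "?L ! i = (T1, True)" "?L ! j = (T2, True)"
    using assms(7) unfolding applied_before_def by blast
  have lg: "inv_log f Byz rs ws g" and cf: "inv_conf Byz g" using assms(1) unfolding invs_def by simp_all
  note L = inv_logD[OF lg assms(4)]
  have n: "T2 \<notin> fst ` set (take i ?L)" using not_in_take[OF L(1) ij(1,2)] ij(4) by simp
  have il: "i < length ?L" using ij by simp
  have "(T1, True) \<in> set ?L" using il ij(3) by (metis nth_mem)
  then obtain t1 where c1: "T1 \<in> confirmed (srv g a) t1" using L(2) by blast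
  have "(T2, True) \<in> set ?L" using ij(2,4) by (metis nth_mem)
  then obtain t2 where c2: "T2 \<in> confirmed (srv g a) t2" using L(2) by blast
  have s: "(T1, t1) \<in> signed g" "(T2, t2) \<in> signed g"
    using inv_confD(2)[OF cf assms(4)] c1 c2 by blast+
  have "T2 \<in> fst ` set (take i ?L) \<or> T2 \<in> cancelled (srv g a) \<or>
        lex_before g T1 T2 \<or> quorum_late f Byz g T1 T2"
    using L(3)[OF il ij(3) assms(5)] .
  then have "lex_before g T1 T2 \<or> quorum_late f Byz g T1 T2" using n assms(6) by blast
  then show ?thesis
  proof
    assume "lex_before g T1 T2" then show ?thesis unfolding lex_before_def by blast
  next
    assume "quorum_late f Byz g T1 T2"
    then have "t1 < t2" using late_imp[OF assms(1-3) _ s(2) s(1)] by blast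
    then show ?thesis using s by blast
  qed
qed

lemma applied_cases:
  assumes "applied L T1" "applied L T2" "T1 \<noteq> T2" "\<not> applied_before L T1 T2"
  shows "applied_before L T2 T1"
proof -
  obtain i j where "i < length L" "L ! i = (T1, True)" "j < length L" "L ! j = (T2, True)"
    using assms(1,2) unfolding applied_def by (metis in_set_conv_nth)
  moreover have "i \<noteq> j" using calculation assms(3) by auto
  ultimately show ?thesis using assms(4) unfolding applied_before_def
    by (metis linorder_neqE_nat)
qed

lemma final_from_invs:
  fixes f :: nat and Byz :: "'s::finite set"
    and rs ws :: "'tx::linorder \<Rightarrow> 'k set"
    and g :: "('s, 'tx) gstate" and a b :: 's and T1 T2 :: 'tx
  assumes "card (UNIV :: 's set) = 4 * f + 1"
    and "card Byz \<le> f"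
    and inv: "invs f Byz rs ws g"
    and "a \<notin> Byz" and "b \<notin> Byz"
    and "conflict rs ws T1 T2"
    and "T1 \<notin> cancelled (srv g a)" and "T2 \<notin> cancelled (srv g a)"
    and "T1 \<notin> cancelled (srv g b)" and "T2 \<notin> cancelled (srv g b)"
    and "applied (log (srv g a)) T1" and "applied (log (srv g a)) T2"
    and "applied (log (srv g b)) T1" and "applied (log (srv g b)) T2"
  shows "applied_before (log (srv g a)) T1 T2 \<longleftrightarrow> applied_before (log (srv g b)) T1 T2"
proof -
  have ne: "T1 \<noteq> T2" using assms(6) unfolding conflict_def by simp
  have cs: "conflict rs ws T2 T1" using assms(6) by (rule conflict_sym)
  have uq: "\<And>T t t'. (T, t) \<in> signed g \<Longrightarrow> (T, t') \<in> signed g \<Longrightarrow> t = t'"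
    using inv unfolding invs_def inv_sig_def by blast
  have contra: False if x: "x \<notin> Byz" "y \<notin> Byz" "T1 \<notin> cancelled (srv g y)" "T2 \<notin> cancelled (srv g x)"
     "applied_before (log (srv g x)) T1 T2" "applied_before (log (srv g y)) T2 T1" for x y
  proof -
    obtain t1 t2 where A: "(T1, t1) \<in> signed g" "(T2, t2) \<in> signed g" "t1 < t2 \<or> (t1 = t2 \<and> T1 < T2)"
      using applied_order[OF inv assms(1,2) x(1) assms(6) x(4) x(5)] by blast
    obtain t1' t2' where B: "(T2, t2') \<in> signed g" "(T1, t1') \<in> signed g" "t2' < t1' \<or> (t2' = t1' \<and> T2 < T1)"
      using applied_order[OF inv assms(1,2) x(2) cs x(3) x(6)] by blast
    have "t1 = t1'" "t2 = t2'" using uq A B by blast+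
    then show False using A(3) B(3) by auto
  qed
  show ?thesis
  proof
    assume h: "applied_before (log (srv g a)) T1 T2"
    show "applied_before (log (srv g b)) T1 T2"
    proof (rule ccontr)
      assume "\<not> applied_before (log (srv g b)) T1 T2"
      then have "applied_before (log (srv g b)) T2 T1" using applied_cases assms ne by metis
      then show False using contra[of a b] h assms by blast
    qed
  next
    assume h: "applied_before (log (srv g b)) T1 T2"
    show "applied_before (log (srv g a)) T1 T2"
    proof (rule ccontr)
      assume "\<not> applied_before (log (srv g a)) T1 T2"
      then have "applied_before (log (srv g a)) T2 T1" using applied_cases assms ne by metis
      then show False using contra[of b a] h assms by blast
    qed
  qed
qed




lemma chan_ok'_pres:
  assumes "chan_ok' ch P Pd F"
    and pre: "ch = pre \<or> (\<exists>m. ch = m # pre \<and> (\<forall>T k. m = Proposed T k \<longrightarrow> (T, k) \<in> Pd'))"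
    and "P \<subseteq> P'" "Pd \<subseteq> Pd'" "F \<subseteq> F'"
    and newP: "\<forall>T k. (T, k) \<in> P' - P \<longrightarrow> (T, k) \<in> Pd' \<or> Proposed T k \<in> set app"
    and newk: "\<forall>T k. (T, k) \<in> P' - P \<longrightarrow> (\<forall>T' t. (T', t) \<in> F \<longrightarrow> t \<le> k)"
    and app: "\<forall>T t. Confirm T t \<in> set app \<longrightarrow> (T, t) \<in> F' \<and> (\<forall>T2 k. (T2, k) \<in> P' \<longrightarrow> k < t \<longrightarrow> (T2, k) \<in> P)"
  shows "chan_ok' (pre @ app) P' Pd' F'"
proof -
  have A: "(T2, k) \<in> Pd' \<or> Proposed T2 k \<in> set pre" if "(T2, k) \<in> P" for T2 k
  proof -
    have "(T2, k) \<in> Pd \<or> Proposed T2 k \<in> set ch" using assms(1) that unfolding chan_ok'_def by blast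
    then show ?thesis using pre assms(4) by auto
  qed
  have B: "(T, t) \<in> F' \<and> (\<forall>T2 k. (T2, k) \<in> P' \<longrightarrow> k < t \<longrightarrow> (T2, k) \<in> Pd' \<or> Proposed T2 k \<in> set (take i pre))"
    if ipre: "i < length pre" "pre ! i = Confirm T t" for i T t
  proof -
    obtain j where j: "j < length ch" "ch ! j = Confirm T t"
      "\<forall>T2 k. Proposed T2 k \<in> set (take j ch) \<longrightarrow> (T2, k) \<in> Pd' \<or> Proposed T2 k \<in> set (take i pre)"
    proof (cases "ch = pre")
      case True then show ?thesis using ipre by (intro that[of i]) auto
    next
      case False
      then obtain m where m: "ch = m # pre" "\<forall>T k. m = Proposed T k \<longrightarrow> (T, k) \<in> Pd'" using pre by blast
      show ?thesis using ipre m by (intro that[of "Suc i"]) auto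
    qed
    have j2: "(T, t) \<in> F \<and> (\<forall>T2 k. (T2, k) \<in> P \<longrightarrow> k < t \<longrightarrow> (T2, k) \<in> Pd \<or> Proposed T2 k \<in> set (take j ch))"
      using assms(1) j(1,2) unfolding chan_ok'_def by blast
    show ?thesis
    proof (intro conjI allI impI)
      show "(T, t) \<in> F'" using j2 assms(5) by blast
    next
      fix T2 k assume h: "(T2, k) \<in> P'" "k < t"
      have "(T2, k) \<in> P"
      proof (rule ccontr)
        assume "(T2, k) \<notin> P"
        then have "t \<le> k" using newk h j2 by blast
        then show False using h by simp
      qed
      then show "(T2, k) \<in> Pd' \<or> Proposed T2 k \<in> set (take i pre)" using j2 j(3) h assms(4) by blast
    qed
  qed
  show ?thesis unfolding chan_ok'_def
  proof (rule conjI; intro allI impI)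
    fix T2 k assume "(T2, k) \<in> P'"
    then show "(T2, k) \<in> Pd' \<or> Proposed T2 k \<in> set (pre @ app)" using A newP by auto
  next
    fix i T t assume i: "i < length (pre @ app)" "(pre @ app) ! i = Confirm T t"
    show "(T, t) \<in> F' \<and> (\<forall>T2 k. (T2, k) \<in> P' \<longrightarrow> k < t \<longrightarrow> (T2, k) \<in> Pd' \<or> Proposed T2 k \<in> set (take i (pre @ app)))"
    proof (cases "i < length pre")
      case True
      then show ?thesis using B[of i T t] i by (auto simp: nth_append)
    next
      case False
      then have "Confirm T t \<in> set app" using i by (metis add_diff_inverse_nat length_append nat_add_left_cancel_less nth_append nth_mem)
      then have c: "(T, t) \<in> F'" "\<forall>T2 k. (T2, k) \<in> P' \<longrightarrow> k < t \<longrightarrow> (T2, k) \<in> P" using app by blast+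
      have "set pre \<subseteq> set (take i (pre @ app))" using False by auto
      then show ?thesis using c A by blast
    qed
  qed
qed


definition grows :: "'s set \<Rightarrow> ('s, 'tx) gstate \<Rightarrow> ('s, 'tx) gstate \<Rightarrow> bool" where
  "grows Byz g g' \<longleftrightarrow> signed g \<subseteq> signed g' \<and> (\<forall>s. s \<notin> Byz \<longrightarrow>
     clock (srv g s) \<le> clock (srv g' s) \<and>
     (\<forall>x. proposed (srv g s) x \<subseteq> proposed (srv g' s) x) \<and>
     (\<forall>t. confirmed (srv g s) t \<subseteq> confirmed (srv g' s) t) \<and>
     cancelled (srv g s) \<subseteq> cancelled (srv g' s) \<and>
     forwarded (srv g s) \<subseteq> forwarded (srv g' s) \<and>
     (\<forall>T. ConfirmWitness (srv g s) T \<subseteq> ConfirmWitness (srv g' s) T) \<and>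
     (\<forall>t. pending (srv g s) t \<noteq> {} \<longrightarrow> pending (srv g' s) t = pending (srv g s) t) \<and>
     (\<forall>T k. (T, k) \<in> proposed (srv g' s) s \<longrightarrow> (T, k) \<notin> proposed (srv g s) s \<longrightarrow> clock (srv g s) \<le> k))"

lemma growsD:
  assumes "grows Byz g g'"
  shows "signed g \<subseteq> signed g'"
    "\<And>s. s \<notin> Byz \<Longrightarrow> clock (srv g s) \<le> clock (srv g' s)"
    "\<And>s x. s \<notin> Byz \<Longrightarrow> proposed (srv g s) x \<subseteq> proposed (srv g' s) x"
    "\<And>s t. s \<notin> Byz \<Longrightarrow> confirmed (srv g s) t \<subseteq> confirmed (srv g' s) t"
    "\<And>s. s \<notin> Byz \<Longrightarrow> cancelled (srv g s) \<subseteq> cancelled (srv g' s)"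
    "\<And>s. s \<notin> Byz \<Longrightarrow> forwarded (srv g s) \<subseteq> forwarded (srv g' s)"
    "\<And>s T. s \<notin> Byz \<Longrightarrow> ConfirmWitness (srv g s) T \<subseteq> ConfirmWitness (srv g' s) T"
    "\<And>s t. s \<notin> Byz \<Longrightarrow> pending (srv g s) t \<noteq> {} \<Longrightarrow> pending (srv g' s) t = pending (srv g s) t"
    "\<And>s T k. s \<notin> Byz \<Longrightarrow> (T, k) \<in> proposed (srv g' s) s \<Longrightarrow> (T, k) \<notin> proposed (srv g s) s \<Longrightarrow> clock (srv g s) \<le> k"
  using assms unfolding grows_def by blast+

lemma inv_log_pres:
  assumes "inv_log f Byz rs ws g" "grows Byz g g'" "\<And>a. a \<notin> Byz \<Longrightarrow> log (srv g' a) = log (srv g a)"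
  shows "inv_log f Byz rs ws g'"
proof -
  note G = growsD[OF assms(2)]
  have lex: "lex_before g' T1 T2" if "lex_before g T1 T2" for T1 T2
    using that G(1) unfolding lex_before_def by blast
  have ql: "quorum_late f Byz g' T1 T2" if qh: "quorum_late f Byz g T1 T2" for T1 T2
  proof -
    obtain t1 W where W: "(T1, t1) \<in> signed g" "card W \<ge> card (UNIV :: 'a set) - f"
      "\<forall>s\<in>W. s \<notin> Byz \<longrightarrow> t1 \<le> clock (srv g s) \<and> (\<forall>k. (T2, k) \<in> proposed (srv g s) s \<longrightarrow> t1 \<le> k)"
      using qh unfolding quorum_late_def by blast
    have "\<forall>s\<in>W. s \<notin> Byz \<longrightarrow> t1 \<le> clock (srv g' s) \<and> (\<forall>k. (T2, k) \<in> proposed (srv g' s) s \<longrightarrow> t1 \<le> k)"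
    proof (intro ballI impI conjI allI)
      fix s k assume s: "s \<in> W" "s \<notin> Byz"
      show "t1 \<le> clock (srv g' s)" using W(3) s G(2)[OF s(2)] by fastforce
      assume "(T2, k) \<in> proposed (srv g' s) s"
      then show "t1 \<le> k" using W(3) s G(9)[OF s(2)] by fastforce
    qed
    then show ?thesis using W G(1) unfolding quorum_late_def by blast
  qed
  show ?thesis unfolding inv_log_def
  proof (intro allI impI conjI)
    fix a assume a: "a \<notin> Byz"
    note L = inv_logD[OF assms(1) a]
    show "distinct (map fst (log (srv g' a)))" using L(1) assms(3)[OF a] by simp
    show "\<exists>t. T \<in> confirmed (srv g' a) t" if "(T, True) \<in> set (log (srv g' a))" for T
      using L(2)[of T] that assms(3)[OF a] G(4)[OF a] by (metis subsetD)
    fix i T1 T2 assume h: "i < length (log (srv g' a))" "log (srv g' a) ! i = (T1, True)" "conflict rs ws T1 T2"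
    have "T2 \<in> fst ` set (take i (log (srv g a))) \<or> T2 \<in> cancelled (srv g a) \<or>
        lex_before g T1 T2 \<or> quorum_late f Byz g T1 T2" using L(3)[of i T1 T2] h assms(3)[OF a] by simp
    then show "T2 \<in> fst ` set (take i (log (srv g' a))) \<or> T2 \<in> cancelled (srv g' a) \<or>
        lex_before g' T1 T2 \<or> quorum_late f Byz g' T1 T2"
      unfolding assms(3)[OF a] using G(5)[OF a] lex ql by blast
  qed
qed

lemma inv_pend_pres:
  assumes "inv_pend f Byz g" "inv_conf Byz g" "grows Byz g g'"
    "\<And>a t. a \<notin> Byz \<Longrightarrow> pending (srv g' a) t \<noteq> {} \<Longrightarrow> pending (srv g a) t \<noteq> {}"
  shows "inv_pend f Byz g'"
  unfolding inv_pend_def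
proof (intro allI impI)
  note G = growsD[OF assms(3)]
  fix a t assume a: "a \<notin> Byz" "pending (srv g' a) t \<noteq> {}"
  have ne: "pending (srv g a) t \<noteq> {}" using assms(4) a by blast
  have eq: "pending (srv g' a) t = pending (srv g a) t" using G(8)[OF a(1) ne] .
  obtain W where W: "card W \<ge> card (UNIV :: 'a set) - f" "\<forall>s\<in>W. s \<notin> Byz \<longrightarrow>
        (\<exists>T. (T, t) \<in> forwarded (srv g s)) \<and>
        (\<forall>T2 k. (T2, k) \<in> proposed (srv g s) s \<longrightarrow> k < t \<longrightarrow> T2 \<in> pending (srv g a) t)"
    using assms(1) a(1) ne unfolding inv_pend_def by blast
  have "\<forall>s\<in>W. s \<notin> Byz \<longrightarrow>
        (\<exists>T. (T, t) \<in> forwarded (srv g' s)) \<and>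
        (\<forall>T2 k. (T2, k) \<in> proposed (srv g' s) s \<longrightarrow> k < t \<longrightarrow> T2 \<in> pending (srv g' a) t)"
  proof (intro ballI impI conjI allI)
    fix s T2 k assume s: "s \<in> W" "s \<notin> Byz"
    obtain T where T: "(T, t) \<in> forwarded (srv g s)" using W(2) s by blast
    then show "\<exists>T. (T, t) \<in> forwarded (srv g' s)" using G(6)[OF s(2)] by blast
    have ct: "t \<le> clock (srv g s)" using inv_confD(4)[OF assms(2) s(2) T] .
    assume "(T2, k) \<in> proposed (srv g' s) s" "k < t"
    then have "(T2, k) \<in> proposed (srv g s) s" using G(9)[OF s(2)] ct by fastforce
    then show "T2 \<in> pending (srv g' a) t" using W(2) s \<open>k < t\<close> eq by blast
  qed
  then show "\<exists>W. card W \<ge> card (UNIV :: 'a set) - f \<and> (\<forall>s\<in>W. s \<notin> Byz \<longrightarrow>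
        (\<exists>T. (T, t) \<in> forwarded (srv g' s)) \<and>
        (\<forall>T2 k. (T2, k) \<in> proposed (srv g' s) s \<longrightarrow> k < t \<longrightarrow> T2 \<in> pending (srv g' a) t))"
    using W(1) by blast
qed

lemma inv_cw_pres:
  assumes "inv_cw Byz g" "inv_conf Byz g" "grows Byz g g'"
    "\<And>a T. a \<notin> Byz \<Longrightarrow> ConfirmWitness (srv g' a) T = ConfirmWitness (srv g a) T"
  shows "inv_cw Byz g'"
  unfolding inv_cw_def
proof (intro allI impI)
  note G = growsD[OF assms(3)]
  fix s a T assume h: "s \<notin> Byz" "a \<notin> Byz" "s \<in> ConfirmWitness (srv g' a) T"
  obtain t where t: "(T, t) \<in> forwarded (srv g s)"
     "\<forall>T2 k. (T2, k) \<in> proposed (srv g s) s \<longrightarrow> k < t \<longrightarrow> (T2, k) \<in> proposed (srv g a) s"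
    using assms(1) h assms(4)[OF h(2)] unfolding inv_cw_def by blast
  have ct: "t \<le> clock (srv g s)" using inv_confD(4)[OF assms(2) h(1) t(1)] .
  have "\<forall>T2 k. (T2, k) \<in> proposed (srv g' s) s \<longrightarrow> k < t \<longrightarrow> (T2, k) \<in> proposed (srv g' a) s"
  proof (intro allI impI)
    fix T2 k assume "(T2, k) \<in> proposed (srv g' s) s" "k < t"
    then have "(T2, k) \<in> proposed (srv g s) s" using G(9)[OF h(1)] ct by fastforce
    then show "(T2, k) \<in> proposed (srv g' a) s" using t(2) \<open>k < t\<close> G(3)[OF h(2)] by blast
  qed
  then show "\<exists>t. (T, t) \<in> forwarded (srv g' s) \<and>
        (\<forall>T2 k. (T2, k) \<in> proposed (srv g' s) s \<longrightarrow> k < t \<longrightarrow> (T2, k) \<in> proposed (srv g' a) s)"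
    using t(1) G(6)[OF h(1)] by blast
qed

lemma inv_chan_pres_same:
  assumes "inv_chan Byz g" "inv_conf Byz g" "grows Byz g g'"
    "\<And>s d. s \<notin> Byz \<Longrightarrow> d \<notin> Byz \<Longrightarrow> chan g' (Srv s) (Srv d) = chan g (Srv s) (Srv d)"
    "\<And>s. s \<notin> Byz \<Longrightarrow> proposed (srv g' s) s = proposed (srv g s) s"
  shows "inv_chan Byz g'"
  unfolding inv_chan_def chan_ok_def
proof (intro allI impI)
  note G = growsD[OF assms(3)]
  fix s d assume h: "s \<notin> Byz" "d \<notin> Byz"
  have "chan_ok' (chan g (Srv s) (Srv d) @ []) (proposed (srv g' s) s) (proposed (srv g' d) s) (forwarded (srv g' s))"
    apply (rule chan_ok'_pres[where P = "proposed (srv g s) s" and Pd = "proposed (srv g d) s" and F = "forwarded (srv g s)"])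
    using assms(1) h unfolding inv_chan_def chan_ok_def apply blast
    using assms(5)[OF h(1)] G(3)[OF h(2)] G(6)[OF h(1)] by auto
  then show "chan_ok' (chan g' (Srv s) (Srv d)) (proposed (srv g' s) s) (proposed (srv g' d) s) (forwarded (srv g' s))"
    using assms(4)[OF h] by simp
qed


lemma invs_init: "invs f Byz rs ws (ginit :: ('s::finite, 'tx::linorder) gstate)"
  unfolding invs_def inv_sig_def inv_conf_def inv_chan_def chan_ok_def chan_ok'_def inv_cw_def inv_pend_def inv_log_def
  by (simp add: ginit_def sinit_def)

lemma cs_srv[simp]: "client_send g T S m (Srv s) = chan g (Srv s)"
  unfolding client_send_def by simp

lemma cs_other: "T' \<noteq> T \<Longrightarrow> client_send g T S m (Cli T') = chan g (Cli T')"
  unfolding client_send_def by simp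

lemma cs_set: "set (client_send g T S m x y) \<subseteq> set (chan g x y) \<union> {m}"
  unfolding client_send_def by (auto split: node.splits)

lemma grows_srv_same: "signed g \<subseteq> signed g' \<Longrightarrow> srv g' = srv g \<Longrightarrow> grows Byz g g'"
  unfolding grows_def by simp

lemma inv_sigD:
  assumes "inv_sig f Byz g"
  shows "\<And>T t t'. (T, t) \<in> signed g \<Longrightarrow> (T, t') \<in> signed g \<Longrightarrow> t = t'"
    "\<And>T t. (T, t) \<in> signed g \<Longrightarrow> cli g T = CDone \<or> cli g T = CCrashed"
    "\<And>T acks. cli g T = CWait acks \<Longrightarrow> ok_acks f Byz g T acks"
    "\<And>s T T' k. s \<notin> Byz \<Longrightarrow> ProposeAck T k \<in> set (chan g (Srv s) (Cli T')) \<Longrightarrow> (T, k) \<in> proposed (srv g s) s"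
    "\<And>s d T k. s \<notin> Byz \<Longrightarrow> Proposed T k \<in> set (chan g (Srv s) d) \<Longrightarrow> (T, k) \<in> proposed (srv g s) s"
  using assms unfolding inv_sig_def by blast+

lemma ok_acks_same: "ok_acks f Byz g T acks \<Longrightarrow> srv g' = srv g \<Longrightarrow> ok_acks f Byz g' T acks"
  unfolding ok_acks_def by simp

lemma invs_srv_same:
  assumes "invs f Byz rs ws g" "srv g' = srv g" "signed g \<subseteq> signed g'"
    "\<And>s d. chan g' (Srv s) (Srv d) = chan g (Srv s) (Srv d)"
    "inv_sig f Byz g'" "\<And>x y T t. Confirm T t \<in> set (chan g' x y) \<Longrightarrow> (T, t) \<in> signed g'"
  shows "invs f Byz rs ws g'"
proof -
  have G: "grows Byz g g'" by (rule grows_srv_same[OF assms(3,2)])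
  have c: "inv_conf Byz g" using assms(1) unfolding invs_def by simp
  have c': "inv_conf Byz g'" using assms(2,3,6) c unfolding inv_conf_def by auto
  have i: "inv_sig f Byz g" "inv_chan Byz g" "inv_cw Byz g" "inv_pend f Byz g" "inv_log f Byz rs ws g"
    using assms(1) unfolding invs_def by simp_all
  show ?thesis unfolding invs_def
    using assms(5) c' inv_log_pres[OF i(5) G] inv_pend_pres[OF i(4) c G] inv_cw_pres[OF i(3) c G]
      inv_chan_pres_same[OF i(2) c G] assms(2,4) by simp
qed

lemma invs_cli_crash:
  assumes "invs f Byz rs ws g"
  shows "invs f Byz rs ws (g\<lparr>cli := (cli g)(T := CCrashed)\<rparr>)"
proof -
  have s: "inv_sig f Byz g" and c: "inv_conf Byz g" using assms unfolding invs_def by simp_all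
  have s': "inv_sig f Byz (g\<lparr>cli := (cli g)(T := CCrashed)\<rparr>)"
    using s unfolding inv_sig_def ok_acks_def by auto
  show ?thesis by (rule invs_srv_same[OF assms _ _ _ s']) (auto dest: inv_confD(1)[OF c])
qed


lemma invs_cli_propose:
  assumes "invs f Byz rs ws g" "cli g T = CIdle"
  shows "invs f Byz rs ws (g\<lparr>chan := client_send g T S (Propose T),
                  cli := (cli g)(T := (if S = UNIV then CWait (\<lambda>_. None) else CCrashed))\<rparr>)"
    (is "invs f Byz rs ws ?g'")
proof -
  have s: "inv_sig f Byz g" and c: "inv_conf Byz g" using assms unfolding invs_def by simp_all
  note S = inv_sigD[OF s]
  have nT: "(T, t) \<notin> signed g" for t using S(2)[of T t] assms(2) by auto
  have s': "inv_sig f Byz ?g'"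
    unfolding inv_sig_def
  proof (intro conjI allI impI)
    show "t = t'" if "(T1, t) \<in> signed ?g'" "(T1, t') \<in> signed ?g'" for T1 t t' using S(1) that by simp
    show "cli ?g' T1 = CDone \<or> cli ?g' T1 = CCrashed" if "(T1, t) \<in> signed ?g'" for T1 t
      using S(2) that nT by (cases "T1 = T") auto
    show "\<exists>acks. card {s. acks s \<noteq> None} \<ge> card (UNIV :: 'a set) - f \<and>
        t = 1 + kth_largest f (\<lambda>s. case acks s of None \<Rightarrow> 0 | Some k \<Rightarrow> k) \<and> ok_acks f Byz ?g' T1 acks"
      if "(T1, t) \<in> signed ?g'" for T1 t
      using s that unfolding inv_sig_def ok_acks_def by simp
    show "ok_acks f Byz ?g' T1 acks" if "cli ?g' T1 = CWait acks" for T1 acks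
      using S(3)[of T1 acks] that unfolding ok_acks_def by (cases "T1 = T") (auto split: if_splits)
    show "(T1, k) \<in> proposed (srv ?g' s) s" if "s \<notin> Byz" "ProposeAck T1 k \<in> set (chan ?g' (Srv s) (Cli T'))" for s T1 T' k
      using S(4) that by simp
    show "(T1, k) \<in> proposed (srv ?g' s) s" if "s \<notin> Byz" "Proposed T1 k \<in> set (chan ?g' (Srv s) d)" for s d T1 k
      using S(5) that by simp
  qed
  show ?thesis
    by (rule invs_srv_same[OF assms(1) _ _ _ s']) (use cs_set inv_confD(1)[OF c] in fastforce)+
qed

lemma invs_cli_confirm:
  assumes "invs f Byz rs ws g" "cli g T = CWait acks" "card {s. acks s \<noteq> None} \<ge> card (UNIV :: 's::finite set) - f"
    "th = 1 + kth_largest f (\<lambda>s. case acks s of None \<Rightarrow> 0 | Some k \<Rightarrow> k)"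
  shows "invs f Byz rs ws ((g :: ('s, 'tx::linorder) gstate)\<lparr>chan := client_send g T S (Confirm T th),
                  cli := (cli g)(T := (if S = UNIV then CDone else CCrashed)),
                  signed := insert (T, th) (signed g)\<rparr>)"
    (is "invs f Byz rs ws ?g'")
proof -
  have s: "inv_sig f Byz g" and c: "inv_conf Byz g" using assms unfolding invs_def by simp_all
  note S = inv_sigD[OF s]
  have nT: "(T, t) \<notin> signed g" for t using S(2)[of T t] assms(2) by auto
  have oa: "ok_acks f Byz ?g' T acks" using S(3)[OF assms(2)] unfolding ok_acks_def by simp
  have s': "inv_sig f Byz ?g'"
    unfolding inv_sig_def
  proof (intro conjI allI impI)
    show "t = t'" if "(T1, t) \<in> signed ?g'" "(T1, t') \<in> signed ?g'" for T1 t t' using S(1) that nT by auto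
    show "cli ?g' T1 = CDone \<or> cli ?g' T1 = CCrashed" if "(T1, t) \<in> signed ?g'" for T1 t
      using S(2) that nT by (cases "T1 = T") auto
    show "\<exists>acks. card {s. acks s \<noteq> None} \<ge> card (UNIV :: 's set) - f \<and>
        t = 1 + kth_largest f (\<lambda>s. case acks s of None \<Rightarrow> 0 | Some k \<Rightarrow> k) \<and> ok_acks f Byz ?g' T1 acks"
      if h: "(T1, t) \<in> signed ?g'" for T1 t
    proof (cases "T1 = T \<and> t = th")
      case True then show ?thesis using assms(3,4) oa by blast
    next
      case False
      then have "(T1, t) \<in> signed g" using h by auto
      then show ?thesis using s unfolding inv_sig_def ok_acks_def by simp
    qed
    show "ok_acks f Byz ?g' T1 acks" if "cli ?g' T1 = CWait acks" for T1 acks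
      using S(3)[of T1 acks] that unfolding ok_acks_def by (cases "T1 = T") (auto split: if_splits)
    show "(T1, k) \<in> proposed (srv ?g' s) s" if "s \<notin> Byz" "ProposeAck T1 k \<in> set (chan ?g' (Srv s) (Cli T'))" for s T1 T' k
      using S(4) that by simp
    show "(T1, k) \<in> proposed (srv ?g' s) s" if "s \<notin> Byz" "Proposed T1 k \<in> set (chan ?g' (Srv s) d)" for s d T1 k
      using S(5) that by simp
  qed
  show ?thesis
    by (rule invs_srv_same[OF assms(1) _ _ _ s']) (use cs_set inv_confD(1)[OF c] in fastforce)+
qed

lemma invs_byz:
  assumes "invs f Byz rs ws g" "b \<in> Byz" "\<forall>T t. m = Confirm T t \<longrightarrow> (T, t) \<in> signed g"
  shows "invs f Byz rs ws (g\<lparr>chan := (chan g)(Srv b := (chan g (Srv b))(y := chan g (Srv b) y @ [m]))\<rparr>)"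
    (is "invs f Byz rs ws ?g'")
proof -
  have s: "inv_sig f Byz g" and c: "inv_conf Byz g" using assms unfolding invs_def by simp_all
  have s': "inv_sig f Byz ?g'"
    using s assms(2) unfolding inv_sig_def ok_acks_def by (auto split: if_splits)
  have e: "chan ?g' (Srv s) (Srv d) = chan g (Srv s) (Srv d)" if "s \<notin> Byz" for s d
    using that assms(2) by auto
  have i: "inv_sig f Byz g" "inv_chan Byz g" "inv_cw Byz g" "inv_pend f Byz g" "inv_log f Byz rs ws g"
    using assms(1) unfolding invs_def by simp_all
  have G: "grows Byz g ?g'" by (rule grows_srv_same) simp_all
  have c': "inv_conf Byz ?g'" using c assms(3) unfolding inv_conf_def by (auto split: if_splits)
  have ch: "inv_chan Byz ?g'" using i(2) e unfolding inv_chan_def chan_ok_def by simp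
  show ?thesis unfolding invs_def
    using s' c' ch inv_log_pres[OF i(5) G] inv_pend_pres[OF i(4) c G] inv_cw_pres[OF i(3) c G] by simp
qed


lemma ph_cases:
  assumes "ph' = (case (c, m, x) of
                        (CWait acks, ProposeAck T' k, Srv s) \<Rightarrow>
                           if T' = T \<and> acks s = None then CWait (acks(s := Some k)) else CWait acks
                      | (ph, _, _) \<Rightarrow> ph)"
  shows "(\<forall>acks. c \<noteq> CWait acks) \<Longrightarrow> ph' = c"
    and "ph' = CWait acks' \<Longrightarrow> \<exists>acks. c = CWait acks \<and>
           (acks' = acks \<or> (\<exists>s k. m = ProposeAck T k \<and> x = Srv s \<and> acks' = acks(s := Some k)))"
  using assms by (auto split: cphase.splits msg.splits node.splits if_splits)

lemma invs_cli_recv: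
  assumes "invs f Byz rs ws g" "chan g x (Cli T) = m # rest"
    "ph' = (case (cli g T, m, x) of
                        (CWait acks, ProposeAck T' k, Srv s) \<Rightarrow>
                           if T' = T \<and> acks s = None then CWait (acks(s := Some k)) else CWait acks
                      | (ph, _, _) \<Rightarrow> ph)"
  shows "invs f Byz rs ws (g\<lparr>chan := (chan g)(x := (chan g x)(Cli T := rest)),
                  cli := (cli g)(T := ph')\<rparr>)"
    (is "invs f Byz rs ws ?g'")
proof -
  have s: "inv_sig f Byz g" and c: "inv_conf Byz g" using assms unfolding invs_def by simp_all
  note S = inv_sigD[OF s]
  note P = ph_cases[OF assms(3)]
  have sub: "set (chan ?g' y z) \<subseteq> set (chan g y z)" for y z
    using assms(2) by (auto simp: set_eq_iff)
  have s': "inv_sig f Byz ?g'"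
    unfolding inv_sig_def
  proof (intro conjI allI impI)
    show "t = t'" if "(T1, t) \<in> signed ?g'" "(T1, t') \<in> signed ?g'" for T1 t t' using S(1) that by simp
    show "cli ?g' T1 = CDone \<or> cli ?g' T1 = CCrashed" if "(T1, t) \<in> signed ?g'" for T1 t
    proof (cases "T1 = T")
      case True
      then have "cli g T = CDone \<or> cli g T = CCrashed" using S(2) that by simp
      then have "ph' = cli g T" using P(1) by auto
      then show ?thesis using True \<open>cli g T = CDone \<or> cli g T = CCrashed\<close> by simp
    qed (use S(2) that in simp)
    show "\<exists>acks. card {s. acks s \<noteq> None} \<ge> card (UNIV :: 'a set) - f \<and>
        t = 1 + kth_largest f (\<lambda>s. case acks s of None \<Rightarrow> 0 | Some k \<Rightarrow> k) \<and> ok_acks f Byz ?g' T1 acks"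
      if "(T1, t) \<in> signed ?g'" for T1 t
      using s that unfolding inv_sig_def ok_acks_def by simp
    show "ok_acks f Byz ?g' T1 acks" if h: "cli ?g' T1 = CWait acks" for T1 acks
    proof (cases "T1 = T")
      case False then show ?thesis using S(3)[of T1 acks] h unfolding ok_acks_def by simp
    next
      case True
      then have "ph' = CWait acks" using h by simp
      then obtain acks0 where a0: "cli g T = CWait acks0"
        "acks = acks0 \<or> (\<exists>s k. m = ProposeAck T k \<and> x = Srv s \<and> acks = acks0(s := Some k))"
        using P(2) by blast
      have o: "ok_acks f Byz g T acks0" using S(3)[OF a0(1)] .
      show ?thesis using a0(2)
      proof
        assume "acks = acks0" then show ?thesis using o True unfolding ok_acks_def by simp
      next
        assume "\<exists>s k. m = ProposeAck T k \<and> x = Srv s \<and> acks = acks0(s := Some k)"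
        then obtain s0 k0 where e: "m = ProposeAck T k0" "x = Srv s0" "acks = acks0(s0 := Some k0)" by blast
        have "ProposeAck T k0 \<in> set (chan g (Srv s0) (Cli T))" using assms(2) e by simp
        then have "s0 \<notin> Byz \<Longrightarrow> (T, k0) \<in> proposed (srv g s0) s0" using S(4) by blast
        then show ?thesis using o True e unfolding ok_acks_def by auto
      qed
    qed
    show "(T1, k) \<in> proposed (srv ?g' s) s" if "s \<notin> Byz" "ProposeAck T1 k \<in> set (chan ?g' (Srv s) (Cli T'))" for s T1 T' k
      using S(4)[of s T1 k T'] that sub[of "Srv s" "Cli T'"] by auto
    show "(T1, k) \<in> proposed (srv ?g' s) s" if "s \<notin> Byz" "Proposed T1 k \<in> set (chan ?g' (Srv s) d)" for s d T1 k
      using S(5)[of s T1 k d] that sub[of "Srv s" d] by auto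
  qed
  show ?thesis
  proof (rule invs_srv_same[OF assms(1) _ _ _ s'])
    fix y z T1 t assume "Confirm T1 t \<in> set (chan ?g' y z)"
    then have "Confirm T1 t \<in> set (chan g y z)" using sub by blast
    then show "(T1, t) \<in> signed ?g'" using inv_confD(1)[OF c] by simp
  qed auto
qed


definition boring :: "'tx msg \<Rightarrow> bool" where
  "boring m \<longleftrightarrow> (\<forall>T k. m \<noteq> Proposed T k \<and> m \<noteq> ProposeAck T k \<and> m \<noteq> Confirm T k)"

lemma chan_ok'_pres2:
  assumes "chan_ok' ch P Pd F"
    and pre: "\<exists>pre. ch' = pre @ app \<and> (ch = pre \<or> (\<exists>m. ch = m # pre \<and> (\<forall>T k. m \<noteq> Proposed T k)))"
    and "P \<subseteq> P'" "Pd \<subseteq> Pd'" "F \<subseteq> F'"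
    and newP: "\<forall>T k. (T, k) \<in> P' - P \<longrightarrow> (T, k) \<in> Pd' \<or> Proposed T k \<in> set app"
    and newk: "\<forall>T k. (T, k) \<in> P' - P \<longrightarrow> (\<forall>T' t. (T', t) \<in> F \<longrightarrow> t \<le> k)"
    and app: "\<forall>T t. Confirm T t \<in> set app \<longrightarrow> (T, t) \<in> F' \<and> (\<forall>T2 k. (T2, k) \<in> P' \<longrightarrow> k < t \<longrightarrow> (T2, k) \<in> P)"
  shows "chan_ok' ch' P' Pd' F'"
proof -
  obtain pre where p: "ch' = pre @ app" "ch = pre \<or> (\<exists>m. ch = m # pre \<and> (\<forall>T k. m \<noteq> Proposed T k))"
    using pre by blast
  have "chan_ok' (pre @ app) P' Pd' F'"
    by (rule chan_ok'_pres[OF assms(1) _ assms(3-5) newP newk app]) (use p(2) in blast)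
  then show ?thesis using p(1) by simp
qed

lemma invs_local0:
  assumes "invs f Byz rs ws g" "s \<notin> Byz"
    and sig: "signed g' = signed g" and cl: "cli g' = cli g" and sv: "srv g' = (srv g)(s := st')"
    and ch: "\<And>y z. \<exists>pre. chan g' y z = pre @ (if y = Srv s then app z else []) \<and>
             (chan g y z = pre \<or> (\<exists>m. chan g y z = m # pre \<and> (\<forall>s0 T k. y = Srv s0 \<longrightarrow> m \<noteq> Proposed T k)))"
    and bo: "\<And>z m. m \<in> set (app z) \<Longrightarrow> boring m"
    and eqs: "proposed st' = proposed (srv g s)" "clock st' = clock (srv g s)"
      "confirmed st' = confirmed (srv g s)" "forwarded st' = forwarded (srv g s)"
      "ConfirmWitness st' = ConfirmWitness (srv g s)" "pending st' = pending (srv g s)"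
      "cancelled (srv g s) \<subseteq> cancelled st'"
  shows "inv_sig f Byz g' \<and> inv_conf Byz g' \<and> inv_chan Byz g' \<and> inv_cw Byz g' \<and> inv_pend f Byz g' \<and> grows Byz g g'"
proof -
  have i: "inv_sig f Byz g" "inv_conf Byz g" "inv_chan Byz g" "inv_cw Byz g" "inv_pend f Byz g" "inv_log f Byz rs ws g"
    using assms(1) unfolding invs_def by simp_all
  have nb: "Confirm T k \<notin> set (app z)" "Proposed T k \<notin> set (app z)" "ProposeAck T k \<notin> set (app z)" for T k z
    using bo unfolding boring_def by blast+
  have sub: "set (chan g' y z) \<subseteq> set (chan g y z) \<union> (if y = Srv s then set (app z) else {})" for y z
    using ch[of y z] by (auto split: if_splits)
  have prp: "proposed (srv g' a) = proposed (srv g a)" for a using sv eqs by simp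
  have G: "grows Byz g g'" unfolding grows_def using sig sv eqs by auto
  have s': "inv_sig f Byz g'"
  proof -
    have chs: "ProposeAck T k \<in> set (chan g y z)" if "ProposeAck T k \<in> set (chan g' y z)" for T k y z
      using that sub[of y z] nb by (auto split: if_splits)
    have chs2: "Proposed T k \<in> set (chan g y z)" if "Proposed T k \<in> set (chan g' y z)" for T k y z
      using that sub[of y z] nb by (auto split: if_splits)
    note S = inv_sigD[OF i(1)]
    have oke: "ok_acks f Byz g' T acks = ok_acks f Byz g T acks" for T acks
      unfolding ok_acks_def using prp by simp
    show ?thesis unfolding inv_sig_def oke sig cl prp
    proof (intro conjI allI impI)
      show "(T, k) \<in> proposed (srv g s0) s0" if "s0 \<notin> Byz" "ProposeAck T k \<in> set (chan g' (Srv s0) (Cli T'))" for s0 T T' k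
        using that S(4) chs[of T k "Srv s0" "Cli T'"] by blast
      show "(T, k) \<in> proposed (srv g s0) s0" if "s0 \<notin> Byz" "Proposed T k \<in> set (chan g' (Srv s0) d)" for s0 T d k
        using that S(5) chs2[of T k "Srv s0" d] by blast
    qed (use i(1) in \<open>unfold inv_sig_def; blast\<close>)+
  qed
  have c': "inv_conf Byz g'"
  proof -
    have chc: "Confirm T k \<in> set (chan g y z)" if "Confirm T k \<in> set (chan g' y z)" for T k y z
      using that sub[of y z] nb by (auto split: if_splits)
    have e: "confirmed (srv g' a) = confirmed (srv g a)" "forwarded (srv g' a) = forwarded (srv g a)"
      "clock (srv g' a) = clock (srv g a)" for a using sv eqs by simp_all
    show ?thesis unfolding inv_conf_def sig e using i(2)[unfolded inv_conf_def] chc by blast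
  qed
  have ch': "inv_chan Byz g'" unfolding inv_chan_def chan_ok_def
  proof (intro allI impI)
    fix s0 d assume h: "s0 \<notin> Byz" "d \<notin> Byz"
    show "chan_ok' (chan g' (Srv s0) (Srv d)) (proposed (srv g' s0) s0) (proposed (srv g' d) s0) (forwarded (srv g' s0))"
      apply (rule chan_ok'_pres2[where P = "proposed (srv g s0) s0" and Pd = "proposed (srv g d) s0" and F = "forwarded (srv g s0)" and ch = "chan g (Srv s0) (Srv d)"])
      using i(3) h unfolding inv_chan_def chan_ok_def apply blast
      using ch[of "Srv s0" "Srv d"] apply simp
      using prp sv eqs nb by (auto split: if_splits)
  qed
  have cw: "inv_cw Byz g'" by (rule inv_cw_pres[OF i(4) i(2) G]) (use sv eqs in \<open>simp split: if_splits\<close>)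
  have pd: "inv_pend f Byz g'" by (rule inv_pend_pres[OF i(5) i(2) G]) (use sv eqs in \<open>simp split: if_splits\<close>)
  show ?thesis using s' c' ch' cw pd G by simp
qed

lemma invs_local:
  assumes "invs f Byz rs ws g" "s \<notin> Byz"
    and sig: "signed g' = signed g" and cl: "cli g' = cli g" and sv: "srv g' = (srv g)(s := st')"
    and ch: "\<And>y z. \<exists>pre. chan g' y z = pre @ (if y = Srv s then app z else []) \<and>
             (chan g y z = pre \<or> (\<exists>m. chan g y z = m # pre \<and> (\<forall>s0 T k. y = Srv s0 \<longrightarrow> m \<noteq> Proposed T k)))"
    and bo: "\<And>z m. m \<in> set (app z) \<Longrightarrow> boring m"
    and eqs: "proposed st' = proposed (srv g s)" "clock st' = clock (srv g s)"
      "confirmed st' = confirmed (srv g s)" "forwarded st' = forwarded (srv g s)"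
      "ConfirmWitness st' = ConfirmWitness (srv g s)" "pending st' = pending (srv g s)"
      "cancelled (srv g s) \<subseteq> cancelled st'" "log st' = log (srv g s)"
  shows "invs f Byz rs ws g'"
proof -
  note A = invs_local0[OF assms(1-7) eqs(1-7)]
  have "inv_log f Byz rs ws g'"
    by (rule inv_log_pres[of f Byz rs ws g]) (use assms(1) A sv eqs in \<open>simp_all add: invs_def\<close>)
  then show ?thesis using A unfolding invs_def by simp
qed


lemma invs_decide:
  assumes "invs f Byz rs ws g" "s \<notin> Byz"
  shows "invs f Byz rs ws (g\<lparr>srv := (srv g)(s := (if c = COMMIT
                     then (srv g s)\<lparr>committed := insert T (committed (srv g s))\<rparr>
                     else (srv g s)\<lparr>cancelled := insert T (cancelled (srv g s))\<rparr>)),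
                  decision := (decision g)(T := Some c)\<rparr>)"
  by (rule invs_local[OF assms, where app = "\<lambda>_. []" and st' = "if c = COMMIT
                     then (srv g s)\<lparr>committed := insert T (committed (srv g s))\<rparr>
                     else (srv g s)\<lparr>cancelled := insert T (cancelled (srv g s))\<rparr>"]) (auto simp: boring_def)

lemma invs_timer:
  assumes "invs f Byz rs ws g" "s \<notin> Byz"
  shows "invs f Byz rs ws (g\<lparr>srv := (srv g)(s := (srv g s)\<lparr>timers := timers (srv g s) - {t},
                                              resolving := resolving (srv g s) \<union> set ts\<rparr>),
                  chan := (chan g)(Srv s := (\<lambda>y. chan g (Srv s) y @
                              to_servers (map (\<lambda>T. StartResolution T CANCEL) ts) y)),
                  cinput := (\<lambda>T. if T \<in> set ts then insert CANCEL (cinput g T) else cinput g T)\<rparr>)"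
  by (rule invs_local[OF assms, where app = "to_servers (map (\<lambda>T. StartResolution T CANCEL) ts)"
       and st' = "(srv g s)\<lparr>timers := timers (srv g s) - {t}, resolving := resolving (srv g s) \<union> set ts\<rparr>"])
     (auto simp: boring_def to_servers_def split: node.splits)


lemma invs_append:
  assumes "invs f Byz rs ws g" "s \<notin> Byz" "T \<notin> fst ` set (log (srv g s))"
    and conf: "b \<Longrightarrow> \<exists>t. T \<in> confirmed (srv g s) t"
    and newc: "\<And>T2. b \<Longrightarrow> conflict rs ws T T2 \<Longrightarrow> T2 \<in> fst ` set (log (srv g s)) \<or> T2 \<in> cancelled (srv g s) \<or>
        lex_before g T T2 \<or> quorum_late f Byz g T T2"
  shows "invs f Byz rs ws (g\<lparr>srv := (srv g)(s := (srv g s)\<lparr>log := log (srv g s) @ [(T, b)]\<rparr>)\<rparr>)"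
    (is "invs f Byz rs ws ?g'")
proof -
  have A: "inv_sig f Byz ?g' \<and> inv_conf Byz ?g' \<and> inv_chan Byz ?g' \<and> inv_cw Byz ?g' \<and> inv_pend f Byz ?g' \<and> grows Byz g ?g'"
    by (rule invs_local0[OF assms(1,2), where app = "\<lambda>_. []" and st' = "(srv g s)\<lparr>log := log (srv g s) @ [(T, b)]\<rparr>"])
       (auto simp: boring_def)
  have L: "inv_log f Byz rs ws g" using assms(1) unfolding invs_def by simp
  have lx: "lex_before ?g' = lex_before g" unfolding lex_before_def by simp
  have ql: "quorum_late f Byz ?g' = quorum_late f Byz g"
  proof -
    have "clock (srv ?g' x) = clock (srv g x)" "proposed (srv ?g' x) = proposed (srv g x)" for x by simp_all
    then show ?thesis unfolding quorum_late_def by simp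
  qed
  have "inv_log f Byz rs ws ?g'" unfolding inv_log_def lx ql
  proof (intro allI impI conjI)
    fix a assume a: "a \<notin> Byz"
    note LD = inv_logD[OF L a]
    show "distinct (map fst (log (srv ?g' a)))" using LD(1) assms(3) by auto
    show "\<exists>t. T' \<in> confirmed (srv ?g' a) t" if "(T', True) \<in> set (log (srv ?g' a))" for T'
      using that LD(2)[of T'] conf by (cases "a = s") auto
    fix i T1 T2 assume h: "i < length (log (srv ?g' a))" "log (srv ?g' a) ! i = (T1, True)" "conflict rs ws T1 T2"
    show "T2 \<in> fst ` set (take i (log (srv ?g' a))) \<or> T2 \<in> cancelled (srv ?g' a) \<or>
        lex_before g T1 T2 \<or> quorum_late f Byz g T1 T2"
    proof (cases "a = s")
      case False then show ?thesis using LD(3)[of i T1 T2] h by simp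
    next
      case True
      show ?thesis
      proof (cases "i < length (log (srv g s))")
        case lt: True
        then show ?thesis using LD(3)[of i T1 T2] h True by (simp add: nth_append)
      next
        case False
        then have "i = length (log (srv g s))" using h True by simp
        then show ?thesis using newc[of T2] h True by simp
      qed
    qed
  qed
  then show ?thesis using A unfolding invs_def by simp
qed

lemma invs_cancel:
  assumes "invs f Byz rs ws g" "s \<notin> Byz" "T \<notin> fst ` set (log (srv g s))"
  shows "invs f Byz rs ws (g\<lparr>srv := (srv g)(s := (srv g s)\<lparr>log := log (srv g s) @ [(T, False)]\<rparr>)\<rparr>)"
  by (rule invs_append[OF assms]) simp_all

lemma invs_apply:
  fixes g :: "('s::finite, 'tx::linorder) gstate"
  assumes "invs f Byz rs ws g" "s \<notin> Byz" "T \<in> committed (srv g s)" "T \<in> confirmed (srv g s) t"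
    "T \<notin> fst ` set (log (srv g s))" "pending (srv g s) t \<noteq> {}"
    "\<forall>T' \<in> pending (srv g s) t. \<not> conflict rs ws T T' \<or> T' \<in> cancelled (srv g s)
                   \<or> T' \<in> fst ` set (log (srv g s)) \<or> order_before (srv g s) T T'"
  shows "invs f Byz rs ws (g\<lparr>srv := (srv g)(s := (srv g s)\<lparr>log := log (srv g s) @ [(T, True)]\<rparr>)\<rparr>)"
proof (rule invs_append[OF assms(1,2,5)])
  show "\<exists>t. T \<in> confirmed (srv g s) t" using assms(4) by blast
  have c: "inv_conf Byz g" and p: "inv_pend f Byz g" using assms(1) unfolding invs_def by simp_all
  have sT: "(T, t) \<in> signed g" using inv_confD(2)[OF c assms(2,4)] .
  fix T2 assume cf: "conflict rs ws T T2"
  show "T2 \<in> fst ` set (log (srv g s)) \<or> T2 \<in> cancelled (srv g s) \<or> lex_before g T T2 \<or> quorum_late f Byz g T T2"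
  proof (cases "T2 \<in> pending (srv g s) t")
    case True
    then have "T2 \<in> cancelled (srv g s) \<or> T2 \<in> fst ` set (log (srv g s)) \<or> order_before (srv g s) T T2"
      using assms(7) cf by blast
    moreover have "lex_before g T T2" if ob: "order_before (srv g s) T T2"
    proof -
      obtain t0 where t0: "T \<in> confirmed (srv g s) t0"
        "(\<exists>t'. T2 \<in> confirmed (srv g s) t' \<and> t0 < t') \<or> (T2 \<in> confirmed (srv g s) t0 \<and> T < T2)"
        using ob unfolding order_before_def by blast
      have "(T, t0) \<in> signed g" using inv_confD(2)[OF c assms(2) t0(1)] .
      show ?thesis using t0(2)
      proof
        assume "\<exists>t'. T2 \<in> confirmed (srv g s) t' \<and> t0 < t'"
        then obtain t' where "T2 \<in> confirmed (srv g s) t'" "t0 < t'" by blast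
        then show ?thesis using \<open>(T, t0) \<in> signed g\<close> inv_confD(2)[OF c assms(2)] unfolding lex_before_def by blast
      next
        assume "T2 \<in> confirmed (srv g s) t0 \<and> T < T2"
        then show ?thesis using \<open>(T, t0) \<in> signed g\<close> inv_confD(2)[OF c assms(2)] unfolding lex_before_def by blast
      qed
    qed
    ultimately show ?thesis by blast
  next
    case False
    obtain W where W: "card W \<ge> card (UNIV :: 's set) - f" "\<forall>s0\<in>W. s0 \<notin> Byz \<longrightarrow>
        (\<exists>T. (T, t) \<in> forwarded (srv g s0)) \<and>
        (\<forall>T2 k. (T2, k) \<in> proposed (srv g s0) s0 \<longrightarrow> k < t \<longrightarrow> T2 \<in> pending (srv g s) t)"
      using p assms(2,6) unfolding inv_pend_def by blast
    have "\<forall>s0\<in>W. s0 \<notin> Byz \<longrightarrow> t \<le> clock (srv g s0) \<and> (\<forall>k. (T2, k) \<in> proposed (srv g s0) s0 \<longrightarrow> t \<le> k)"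
    proof (intro ballI impI conjI allI)
      fix s0 assume s0: "s0 \<in> W" "s0 \<notin> Byz"
      then obtain T0 where "(T0, t) \<in> forwarded (srv g s0)" using W(2) by blast
      then show "t \<le> clock (srv g s0)" using inv_confD(4)[OF c s0(2)] by blast
      fix k assume "(T2, k) \<in> proposed (srv g s0) s0"
      then show "t \<le> k" using W(2) s0 False not_le by blast
    qed
    then have "quorum_late f Byz g T T2" unfolding quorum_late_def using sT W(1) by blast
    then show ?thesis by blast
  qed
qed


lemma srv_step_simps:
  "srv (srv_step g s st' outs ins x rest) = (srv g)(s := st')"
  "signed (srv_step g s st' outs ins x rest) = signed g"
  "cli (srv_step g s st' outs ins x rest) = cli g"
  "chan (srv_step g s st' outs ins x rest) y z =
     (if y = x \<and> z = Srv s then rest else chan g y z) @ (if y = Srv s then outs z else [])"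
  unfolding srv_step_def Let_def by auto

lemma invs_recv_boring:
  assumes "invs f Byz rs ws g" "s \<notin> Byz" "chan g x (Srv s) = m # rest"
    "\<forall>s0 T k. x = Srv s0 \<longrightarrow> m \<noteq> Proposed T k"
    "\<And>z m'. m' \<in> set (outs z) \<Longrightarrow> boring m'"
    "proposed st' = proposed (srv g s)" "clock st' = clock (srv g s)"
    "confirmed st' = confirmed (srv g s)" "forwarded st' = forwarded (srv g s)"
    "ConfirmWitness st' = ConfirmWitness (srv g s)" "pending st' = pending (srv g s)"
    "cancelled (srv g s) \<subseteq> cancelled st'" "log st' = log (srv g s)"
  shows "invs f Byz rs ws (srv_step g s st' outs ins x rest)"
proof (rule invs_local[OF assms(1,2) _ _ _ _ assms(5-13)])
  show "\<exists>pre. chan (srv_step g s st' outs ins x rest) y z = pre @ (if y = Srv s then outs z else []) \<and>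
             (chan g y z = pre \<or> (\<exists>m. chan g y z = m # pre \<and> (\<forall>s0 T k. y = Srv s0 \<longrightarrow> m \<noteq> Proposed T k)))" for y z
    using assms(3,4) by (auto simp: srv_step_simps)
qed (simp_all add: srv_step_simps)


lemma invs_on_propose:
  assumes "invs f Byz rs ws g" "s \<notin> Byz" "chan g (Cli T0) (Srv s) = m # rest"
    "on_propose s (Cli T0) T (srv g s) = (st', outs, ins)"
  shows "invs f Byz rs ws (srv_step g s st' outs ins (Cli T0) rest)"
    (is "invs f Byz rs ws ?g'")
proof -
  have i: "inv_sig f Byz g" "inv_conf Byz g" "inv_chan Byz g" "inv_cw Byz g" "inv_pend f Byz g" "inv_log f Byz rs ws g"
    using assms(1) unfolding invs_def by simp_all
  define c0 where "c0 = clock (srv g s)"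
  have st': "st' = (srv g s)\<lparr>proposed := (proposed (srv g s))(s := insert (T, c0) (proposed (srv g s) s))\<rparr>"
    and outs: "outs = (\<lambda>d. if d = Cli T0 then [ProposeAck T c0] else case d of Srv _ \<Rightarrow> [Proposed T c0] | Cli _ \<Rightarrow> [])"
    using assms(4) unfolding on_propose_def c0_def by auto
  have sv: "srv ?g' = (srv g)(s := st')" and sg: "signed ?g' = signed g" and cl: "cli ?g' = cli g"
    by (simp_all add: srv_step_simps)
  have ch: "chan ?g' y z = (if y = Cli T0 \<and> z = Srv s then rest else chan g y z) @ (if y = Srv s then outs z else [])" for y z
    by (simp add: srv_step_simps)
  have prp: "proposed (srv ?g' a) b = (if a = s \<and> b = s then insert (T, c0) (proposed (srv g s) s) else proposed (srv g a) b)" for a b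
    using sv st' by auto
  have oth: "clock (srv ?g' a) = clock (srv g a)" "confirmed (srv ?g' a) = confirmed (srv g a)"
    "forwarded (srv ?g' a) = forwarded (srv g a)" "ConfirmWitness (srv ?g' a) = ConfirmWitness (srv g a)"
    "pending (srv ?g' a) = pending (srv g a)" "cancelled (srv ?g' a) = cancelled (srv g a)"
    "log (srv ?g' a) = log (srv g a)" for a
    using sv st' by auto
  have sub: "set (chan ?g' y z) \<subseteq> set (chan g y z) \<union> (if y = Srv s then set (outs z) else {})" for y z
    using assms(3) unfolding ch by auto
  have G: "grows Byz g ?g'" unfolding grows_def using sg prp oth c0_def by auto
  note S = inv_sigD[OF i(1)]
  have s': "inv_sig f Byz ?g'"
  proof -
    have oke: "ok_acks f Byz g T' acks \<Longrightarrow> ok_acks f Byz ?g' T' acks" for T' acks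
      unfolding ok_acks_def using prp by auto
    have pa: "(T1, k) \<in> proposed (srv ?g' s0) s0" if "s0 \<notin> Byz" "ProposeAck T1 k \<in> set (chan ?g' (Srv s0) (Cli T'))" for s0 T1 T' k
    proof -
      have "ProposeAck T1 k \<in> set (chan g (Srv s0) (Cli T')) \<or> (s0 = s \<and> T1 = T \<and> k = c0)"
        using that sub[of "Srv s0" "Cli T'"] unfolding outs by (auto split: if_splits node.splits)
      then show ?thesis using S(4) that prp by auto
    qed
    have pp: "(T1, k) \<in> proposed (srv ?g' s0) s0" if "s0 \<notin> Byz" "Proposed T1 k \<in> set (chan ?g' (Srv s0) d)" for s0 T1 d k
    proof -
      have "Proposed T1 k \<in> set (chan g (Srv s0) d) \<or> (s0 = s \<and> T1 = T \<and> k = c0)"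
        using that sub[of "Srv s0" d] unfolding outs by (auto split: if_splits node.splits)
      then show ?thesis using S(5) that prp by auto
    qed
    show ?thesis unfolding inv_sig_def sg cl
    proof (intro conjI allI impI)
      show "\<exists>acks. card {s. acks s \<noteq> None} \<ge> card (UNIV :: 'a set) - f \<and>
        t = 1 + kth_largest f (\<lambda>s. case acks s of None \<Rightarrow> 0 | Some k \<Rightarrow> k) \<and> ok_acks f Byz ?g' T1 acks"
        if "(T1, t) \<in> signed g" for T1 t
        using i(1) that oke unfolding inv_sig_def by blast
      show "ok_acks f Byz ?g' T1 acks" if "cli g T1 = CWait acks" for T1 acks
        using S(3) that oke by blast
      show "t = t'" if "(T1, t) \<in> signed g" "(T1, t') \<in> signed g" for T1 t t' using S(1) that by blast
      show "cli g T1 = CDone \<or> cli g T1 = CCrashed" if "(T1, t) \<in> signed g" for T1 t using S(2) that by blast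
      show "(T1, k) \<in> proposed (srv ?g' s0) s0" if "s0 \<notin> Byz" "ProposeAck T1 k \<in> set (chan ?g' (Srv s0) (Cli T'))" for s0 T1 T' k
        using pa that by blast
      show "(T1, k) \<in> proposed (srv ?g' s0) s0" if "s0 \<notin> Byz" "Proposed T1 k \<in> set (chan ?g' (Srv s0) d)" for s0 T1 d k
        using pp that by blast
    qed
  qed
  have c': "inv_conf Byz ?g'"
  proof -
    have chc: "Confirm T1 k \<in> set (chan g y z)" if "Confirm T1 k \<in> set (chan ?g' y z)" for T1 k y z
      using that sub[of y z] unfolding outs by (auto split: if_splits node.splits)
    show ?thesis unfolding inv_conf_def sg oth using i(2)[unfolded inv_conf_def] chc by blast
  qed
  have ch': "inv_chan Byz ?g'" unfolding inv_chan_def chan_ok_def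
  proof (intro allI impI)
    fix s0 d assume h: "s0 \<notin> Byz" "d \<notin> Byz"
    show "chan_ok' (chan ?g' (Srv s0) (Srv d)) (proposed (srv ?g' s0) s0) (proposed (srv ?g' d) s0) (forwarded (srv ?g' s0))"
      apply (rule chan_ok'_pres2[where P = "proposed (srv g s0) s0" and Pd = "proposed (srv g d) s0" and F = "forwarded (srv g s0)"
            and ch = "chan g (Srv s0) (Srv d)" and app = "if s0 = s then [Proposed T c0] else []"])
      using i(3) h unfolding inv_chan_def chan_ok_def apply blast
      using ch[of "Srv s0" "Srv d"] outs apply simp
      subgoal using prp by auto
      subgoal using prp by auto
      subgoal using oth by auto
      subgoal using prp by (simp split: if_splits) blast
      subgoal using prp inv_confD(4)[OF i(2) h(1)] c0_def by (auto split: if_splits)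
      subgoal by simp
      done
  qed
  have cw: "inv_cw Byz ?g'" by (rule inv_cw_pres[OF i(4) i(2) G]) (simp add: oth)
  have pd: "inv_pend f Byz ?g'" by (rule inv_pend_pres[OF i(5) i(2) G]) (simp add: oth)
  have lg: "inv_log f Byz rs ws ?g'" by (rule inv_log_pres[OF i(6) G]) (simp add: oth)
  show ?thesis unfolding invs_def using s' c' ch' cw pd lg by simp
qed


lemma invs_on_proposed:
  assumes "invs f Byz rs ws g" "s \<notin> Byz" "chan g (Srv s1) (Srv s) = Proposed T k # rest"
    "on_proposed s1 T k (srv g s) = (st', outs, ins)"
  shows "invs f Byz rs ws (srv_step g s st' outs ins (Srv s1) rest)"
    (is "invs f Byz rs ws ?g'")
proof -
  have i: "inv_sig f Byz g" "inv_conf Byz g" "inv_chan Byz g" "inv_cw Byz g" "inv_pend f Byz g" "inv_log f Byz rs ws g"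
    using assms(1) unfolding invs_def by simp_all
  note S = inv_sigD[OF i(1)]
  have st': "st' = (srv g s)\<lparr>proposed := (proposed (srv g s))(s1 := insert (T, k) (proposed (srv g s) s1))\<rparr>"
    and outs: "outs = no_out"
    using assms(4) unfolding on_proposed_def by auto
  have sv: "srv ?g' = (srv g)(s := st')" and sg: "signed ?g' = signed g" and cl: "cli ?g' = cli g"
    by (simp_all add: srv_step_simps)
  have ch: "chan ?g' y z = (if y = Srv s1 \<and> z = Srv s then rest else chan g y z)" for y z
    by (simp add: srv_step_simps outs no_out_def)
  have own: "(T, k) \<in> proposed (srv g s) s" if "s1 = s"
    using S(5)[OF assms(2), of T k "Srv s"] assms(3) that by simp
  have prp: "proposed (srv ?g' a) b = (if a = s \<and> b = s1 then insert (T, k) (proposed (srv g a) b) else proposed (srv g a) b)" for a b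
    using sv st' by auto
  have prown: "proposed (srv ?g' a) a = proposed (srv g a) a" if "a \<notin> Byz" for a
    using prp own that by auto
  have prsub: "proposed (srv g a) b \<subseteq> proposed (srv ?g' a) b" for a b
    using prp by auto
  have oth: "clock (srv ?g' a) = clock (srv g a)" "confirmed (srv ?g' a) = confirmed (srv g a)"
    "forwarded (srv ?g' a) = forwarded (srv g a)" "ConfirmWitness (srv ?g' a) = ConfirmWitness (srv g a)"
    "pending (srv ?g' a) = pending (srv g a)" "cancelled (srv ?g' a) = cancelled (srv g a)"
    "log (srv ?g' a) = log (srv g a)" for a
    using sv st' by auto
  have sub: "set (chan ?g' y z) \<subseteq> set (chan g y z)" for y z
    using assms(3) unfolding ch by auto
  have G: "grows Byz g ?g'" unfolding grows_def using sg prsub prown oth by auto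
  have s': "inv_sig f Byz ?g'"
  proof -
    have oke: "ok_acks f Byz g T' acks \<Longrightarrow> ok_acks f Byz ?g' T' acks" for T' acks
      unfolding ok_acks_def using prown by auto
    show ?thesis unfolding inv_sig_def sg cl
    proof (intro conjI allI impI)
      show "\<exists>acks. card {s. acks s \<noteq> None} \<ge> card (UNIV :: 'a set) - f \<and>
        t = 1 + kth_largest f (\<lambda>s. case acks s of None \<Rightarrow> 0 | Some k \<Rightarrow> k) \<and> ok_acks f Byz ?g' T1 acks"
        if "(T1, t) \<in> signed g" for T1 t
        using i(1) that oke unfolding inv_sig_def by blast
      show "ok_acks f Byz ?g' T1 acks" if "cli g T1 = CWait acks" for T1 acks
        using S(3) that oke by blast
      show "t = t'" if "(T1, t) \<in> signed g" "(T1, t') \<in> signed g" for T1 t t' using S(1) that by blast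
      show "cli g T1 = CDone \<or> cli g T1 = CCrashed" if "(T1, t) \<in> signed g" for T1 t using S(2) that by blast
      show "(T1, k) \<in> proposed (srv ?g' s0) s0" if "s0 \<notin> Byz" "ProposeAck T1 k \<in> set (chan ?g' (Srv s0) (Cli T'))" for s0 T1 T' k
        using S(4)[of s0 T1 k T'] sub[of "Srv s0" "Cli T'"] that prown by auto
      show "(T1, k) \<in> proposed (srv ?g' s0) s0" if "s0 \<notin> Byz" "Proposed T1 k \<in> set (chan ?g' (Srv s0) d)" for s0 T1 d k
        using S(5)[of s0 T1 k d] sub[of "Srv s0" d] that prown by auto
    qed
  qed
  have c': "inv_conf Byz ?g'"
  proof -
    have chc: "Confirm T1 k \<in> set (chan g y z)" if "Confirm T1 k \<in> set (chan ?g' y z)" for T1 k y z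
      using that sub[of y z] by auto
    show ?thesis unfolding inv_conf_def sg oth using i(2)[unfolded inv_conf_def] chc by blast
  qed
  have ch': "inv_chan Byz ?g'" unfolding inv_chan_def chan_ok_def
  proof (intro allI impI)
    fix s0 d assume h: "s0 \<notin> Byz" "d \<notin> Byz"
    have "chan_ok' (chan ?g' (Srv s0) (Srv d) @ []) (proposed (srv ?g' s0) s0) (proposed (srv ?g' d) s0) (forwarded (srv ?g' s0))"
      apply (rule chan_ok'_pres[where P = "proposed (srv g s0) s0" and Pd = "proposed (srv g d) s0" and F = "forwarded (srv g s0)"
            and ch = "chan g (Srv s0) (Srv d)"])
      subgoal using i(3) h unfolding inv_chan_def chan_ok_def by blast
      subgoal using ch[of "Srv s0" "Srv d"] assms(3) prp by auto
      subgoal using prown h by auto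
      subgoal using prsub by auto
      subgoal using oth by auto
      subgoal using prown h by auto
      subgoal using prown h by auto
      subgoal by simp
      done
    then show "chan_ok' (chan ?g' (Srv s0) (Srv d)) (proposed (srv ?g' s0) s0) (proposed (srv ?g' d) s0) (forwarded (srv ?g' s0))"
      by simp
  qed
  have cw: "inv_cw Byz ?g'" by (rule inv_cw_pres[OF i(4) i(2) G]) (simp add: oth)
  have pd: "inv_pend f Byz ?g'" by (rule inv_pend_pres[OF i(5) i(2) G]) (simp add: oth)
  have lg: "inv_log f Byz rs ws ?g'" by (rule inv_log_pres[OF i(6) G]) (simp add: oth)
  show ?thesis unfolding invs_def using s' c' ch' cw pd lg by simp
qed


lemma on_confirm_fst:
  "proposed (fst (on_confirm q x T t st)) = proposed st"
  "clock (fst (on_confirm q x T t st)) = max (clock st) t"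
  "confirmed (fst (on_confirm q x T t st)) = (confirmed st)(t := insert T (confirmed st t))"
  "forwarded (fst (on_confirm q x T t st)) = insert (T, t) (forwarded st)"
  "cancelled (fst (on_confirm q x T t st)) = cancelled st"
  "log (fst (on_confirm q x T t st)) = log st"
  "ConfirmWitness (fst (on_confirm q x T t st)) = (case x of Srv s' \<Rightarrow> (ConfirmWitness st)(T := insert s' (ConfirmWitness st T)) | Cli _ \<Rightarrow> ConfirmWitness st)"
  unfolding on_confirm_def Let_def
  by (simp_all split: node.splits)


lemma on_confirm_pend:
  "t' \<noteq> t \<Longrightarrow> pending (fst (on_confirm q x T t st)) t' = pending st t'"
  "pending st t \<noteq> {} \<Longrightarrow> pending (fst (on_confirm q x T t st)) t = pending st t"
  unfolding on_confirm_def Let_def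
  by (simp_all split: node.splits)

lemma on_confirm_pend2:
  "pending (fst (on_confirm q x T t st)) t \<noteq> pending st t \<Longrightarrow>
     pending (fst (on_confirm q x T t st)) t = {T'. \<exists>s'\<in>ConfirmWitness (fst (on_confirm q x T t st)) T. \<exists>k\<le>t. (T', k) \<in> proposed st s'}
     \<and> card (ConfirmWitness (fst (on_confirm q x T t st)) T) = q"
  unfolding on_confirm_def Let_def
  by (simp split: node.splits if_splits)

lemma on_confirm_outs:
  "m \<in> set (fst (snd (on_confirm q x T t st)) z) \<Longrightarrow> m = Confirm T t \<or> boring m"
  unfolding on_confirm_def Let_def
  by (auto simp: boring_def to_servers_def split: node.splits if_splits)


lemma inv_cw_pres2:
  assumes "inv_cw Byz g" "inv_conf Byz g" "grows Byz g g'"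
    and new: "\<And>a T s. a \<notin> Byz \<Longrightarrow> s \<notin> Byz \<Longrightarrow> s \<in> ConfirmWitness (srv g' a) T \<Longrightarrow> s \<notin> ConfirmWitness (srv g a) T \<Longrightarrow>
       \<exists>t. (T, t) \<in> forwarded (srv g' s) \<and>
        (\<forall>T2 k. (T2, k) \<in> proposed (srv g' s) s \<longrightarrow> k < t \<longrightarrow> (T2, k) \<in> proposed (srv g' a) s)"
  shows "inv_cw Byz g'"
  unfolding inv_cw_def
proof (intro allI impI)
  note G = growsD[OF assms(3)]
  fix s a T assume h: "s \<notin> Byz" "a \<notin> Byz" "s \<in> ConfirmWitness (srv g' a) T"
  show "\<exists>t. (T, t) \<in> forwarded (srv g' s) \<and>
        (\<forall>T2 k. (T2, k) \<in> proposed (srv g' s) s \<longrightarrow> k < t \<longrightarrow> (T2, k) \<in> proposed (srv g' a) s)"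
  proof (cases "s \<in> ConfirmWitness (srv g a) T")
    case False then show ?thesis using new h by blast
  next
    case True
    obtain t where t: "(T, t) \<in> forwarded (srv g s)"
       "\<forall>T2 k. (T2, k) \<in> proposed (srv g s) s \<longrightarrow> k < t \<longrightarrow> (T2, k) \<in> proposed (srv g a) s"
      using assms(1) h True unfolding inv_cw_def by blast
    have ct: "t \<le> clock (srv g s)" using inv_confD(4)[OF assms(2) h(1) t(1)] .
    have "\<forall>T2 k. (T2, k) \<in> proposed (srv g' s) s \<longrightarrow> k < t \<longrightarrow> (T2, k) \<in> proposed (srv g' a) s"
    proof (intro allI impI)
      fix T2 k assume "(T2, k) \<in> proposed (srv g' s) s" "k < t"
      then have "(T2, k) \<in> proposed (srv g s) s" using G(9)[OF h(1)] ct by fastforce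
      then show "(T2, k) \<in> proposed (srv g' a) s" using t(2) \<open>k < t\<close> G(3)[OF h(2)] by blast
    qed
    then show ?thesis using t(1) G(6)[OF h(1)] by blast
  qed
qed

lemma inv_pend_pres2:
  assumes "inv_pend f Byz g" "inv_conf Byz g" "grows Byz g g'"
    and new: "\<And>a t. a \<notin> Byz \<Longrightarrow> pending (srv g' a) t \<noteq> {} \<Longrightarrow> pending (srv g a) t = {} \<Longrightarrow>
      \<exists>W. card W \<ge> card (UNIV :: 's::finite set) - f \<and> (\<forall>s\<in>W. s \<notin> Byz \<longrightarrow>
        (\<exists>T. (T, t) \<in> forwarded (srv g' s)) \<and>
        (\<forall>T2 k. (T2, k) \<in> proposed (srv g' s) s \<longrightarrow> k < t \<longrightarrow> T2 \<in> pending (srv g' a) t))"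
  shows "inv_pend f Byz (g' :: ('s, 'tx) gstate)"
  unfolding inv_pend_def
proof (intro allI impI)
  note G = growsD[OF assms(3)]
  fix a t assume a: "a \<notin> Byz" "pending (srv g' a) t \<noteq> {}"
  show "\<exists>W. card W \<ge> card (UNIV :: 's set) - f \<and> (\<forall>s\<in>W. s \<notin> Byz \<longrightarrow>
        (\<exists>T. (T, t) \<in> forwarded (srv g' s)) \<and>
        (\<forall>T2 k. (T2, k) \<in> proposed (srv g' s) s \<longrightarrow> k < t \<longrightarrow> T2 \<in> pending (srv g' a) t))"
  proof (cases "pending (srv g a) t = {}")
    case True then show ?thesis using new a by blast
  next
    case False
    then have ne: "pending (srv g a) t \<noteq> {}" .
    have eq: "pending (srv g' a) t = pending (srv g a) t" using G(8)[OF a(1) ne] .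
    obtain W where W: "card W \<ge> card (UNIV :: 's set) - f" "\<forall>s\<in>W. s \<notin> Byz \<longrightarrow>
          (\<exists>T. (T, t) \<in> forwarded (srv g s)) \<and>
          (\<forall>T2 k. (T2, k) \<in> proposed (srv g s) s \<longrightarrow> k < t \<longrightarrow> T2 \<in> pending (srv g a) t)"
      using assms(1) a(1) ne unfolding inv_pend_def by blast
    have "\<forall>s\<in>W. s \<notin> Byz \<longrightarrow>
          (\<exists>T. (T, t) \<in> forwarded (srv g' s)) \<and>
          (\<forall>T2 k. (T2, k) \<in> proposed (srv g' s) s \<longrightarrow> k < t \<longrightarrow> T2 \<in> pending (srv g' a) t)"
    proof (intro ballI impI conjI allI)
      fix s T2 k assume s: "s \<in> W" "s \<notin> Byz"
      obtain T where T: "(T, t) \<in> forwarded (srv g s)" using W(2) s by blast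
      then show "\<exists>T. (T, t) \<in> forwarded (srv g' s)" using G(6)[OF s(2)] by blast
      have ct: "t \<le> clock (srv g s)" using inv_confD(4)[OF assms(2) s(2) T] .
      assume "(T2, k) \<in> proposed (srv g' s) s" "k < t"
      then have "(T2, k) \<in> proposed (srv g s) s" using G(9)[OF s(2)] ct by fastforce
      then show "T2 \<in> pending (srv g' a) t" using W(2) s \<open>k < t\<close> eq by blast
    qed
    then show ?thesis using W(1) by blast
  qed
qed


lemma invs_on_confirm:
  fixes g :: "('s::finite, 'tx::linorder) gstate"
  assumes "invs f Byz rs ws g" "s \<notin> Byz" "chan g x (Srv s) = Confirm T t # rest"
    "on_confirm (card (UNIV :: 's set) - f) x T t (srv g s) = (st', outs, ins)"
  shows "invs f Byz rs ws (srv_step g s st' outs ins x rest)"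
    (is "invs f Byz rs ws ?g'")
proof -
  let ?q = "card (UNIV :: 's set) - f"
  have i: "inv_sig f Byz g" "inv_conf Byz g" "inv_chan Byz g" "inv_cw Byz g" "inv_pend f Byz g" "inv_log f Byz rs ws g"
    using assms(1) unfolding invs_def by simp_all
  note S = inv_sigD[OF i(1)]
  have stE: "st' = fst (on_confirm ?q x T t (srv g s))" and outE: "outs = fst (snd (on_confirm ?q x T t (srv g s)))"
    using assms(4) by simp_all
  note F = on_confirm_fst[where q = "card (UNIV :: 's set) - f" and x = x and T = T and t = t and st = "srv g s", folded stE]
  note PE = on_confirm_pend[where q = "card (UNIV :: 's set) - f" and x = x and T = T and t = t and st = "srv g s", folded stE]
  note PE2 = on_confirm_pend2[where q = "card (UNIV :: 's set) - f" and x = x and T = T and t = t and st = "srv g s", folded stE]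
  note OU = on_confirm_outs[where q = "card (UNIV :: 's set) - f" and x = x and T = T and t = t and st = "srv g s", folded outE]
  have sT: "(T, t) \<in> signed g" using inv_confD(1)[OF i(2), of T t x "Srv s"] assms(3) by simp
  have sv: "srv ?g' = (srv g)(s := st')" and sg: "signed ?g' = signed g" and cl: "cli ?g' = cli g"
    by (simp_all add: srv_step_simps)
  have ch: "chan ?g' y z = (if y = x \<and> z = Srv s then rest else chan g y z) @ (if y = Srv s then outs z else [])" for y z
    by (simp add: srv_step_simps)
  have sub: "set (chan ?g' y z) \<subseteq> set (chan g y z) \<union> (if y = Srv s then set (outs z) else {})" for y z
    using assms(3) unfolding ch by auto
  have prp: "proposed (srv ?g' a) = proposed (srv g a)" for a using sv F by simp
  have oth: "cancelled (srv ?g' a) = cancelled (srv g a)" "log (srv ?g' a) = log (srv g a)" for a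
    using sv F by simp_all
  have pg: "pending (srv ?g' a) t' = pending (srv g a) t'" if "pending (srv g a) t' \<noteq> {}" for a t'
    using sv PE that by (cases "t' = t") auto
  have G: "grows Byz g ?g'" unfolding grows_def
    using sg prp oth sv F pg by (auto split: node.splits)
  note GD = growsD[OF G]
  have s': "inv_sig f Byz ?g'"
  proof -
    have oke: "ok_acks f Byz ?g' T' acks = ok_acks f Byz g T' acks" for T' acks
      unfolding ok_acks_def using prp by auto
    have pa: "ProposeAck T1 k \<in> set (chan g y z)" if "ProposeAck T1 k \<in> set (chan ?g' y z)" for T1 k y z
      using that sub[of y z] OU unfolding boring_def by (auto split: if_splits)
    have pp: "Proposed T1 k \<in> set (chan g y z)" if "Proposed T1 k \<in> set (chan ?g' y z)" for T1 k y z
      using that sub[of y z] OU unfolding boring_def by (auto split: if_splits)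
    show ?thesis unfolding inv_sig_def sg cl oke prp
    proof (intro conjI allI impI)
      show "\<exists>acks. card {s. acks s \<noteq> None} \<ge> card (UNIV :: 's set) - f \<and>
        t = 1 + kth_largest f (\<lambda>s. case acks s of None \<Rightarrow> 0 | Some k \<Rightarrow> k) \<and> ok_acks f Byz g T1 acks"
        if "(T1, t) \<in> signed g" for T1 t
        using i(1) that unfolding inv_sig_def by blast
      show "ok_acks f Byz g T1 acks" if "cli g T1 = CWait acks" for T1 acks
        using S(3) that by blast
      show "t = t'" if "(T1, t) \<in> signed g" "(T1, t') \<in> signed g" for T1 t t' using S(1) that by blast
      show "cli g T1 = CDone \<or> cli g T1 = CCrashed" if "(T1, t) \<in> signed g" for T1 t using S(2) that by blast
      show "(T1, k) \<in> proposed (srv g s0) s0" if "s0 \<notin> Byz" "ProposeAck T1 k \<in> set (chan ?g' (Srv s0) (Cli T'))" for s0 T1 T' k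
        using S(4)[of s0 T1 k T'] pa that by blast
      show "(T1, k) \<in> proposed (srv g s0) s0" if "s0 \<notin> Byz" "Proposed T1 k \<in> set (chan ?g' (Srv s0) d)" for s0 T1 d k
        using S(5)[of s0 T1 k d] pp that by blast
    qed
  qed
  have c': "inv_conf Byz ?g'"
  proof -
    have chc: "(T1, k) \<in> signed g" if "Confirm T1 k \<in> set (chan ?g' y z)" for T1 k y z
    proof -
      have "Confirm T1 k \<in> set (chan g y z) \<or> (T1 = T \<and> k = t)"
        using that sub[of y z] OU unfolding boring_def by (auto split: if_splits)
      then show ?thesis using inv_confD(1)[OF i(2)] sT by blast
    qed
    have cf: "(T1, t1) \<in> signed g" if "a \<notin> Byz" "T1 \<in> confirmed (srv ?g' a) t1" for a T1 t1
      using that inv_confD(2)[OF i(2)] sT sv F by (auto split: if_splits)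
    have fw: "(T1, t1) \<in> signed g \<and> t1 \<le> clock (srv ?g' a)" if "a \<notin> Byz" "(T1, t1) \<in> forwarded (srv ?g' a)" for a T1 t1
    proof (cases "a = s")
      case True
      then have "(T1, t1) = (T, t) \<or> (T1, t1) \<in> forwarded (srv g s)" using that sv F by simp
      moreover have "clock (srv ?g' a) = max (clock (srv g s)) t" using True sv F by simp
      ultimately show ?thesis using inv_confD(3,4)[OF i(2) assms(2)] sT by (auto simp: le_max_iff_disj)
    next
      case False
      then show ?thesis using that inv_confD(3,4)[OF i(2)] sv by simp
    qed
    show ?thesis unfolding inv_conf_def sg using chc cf fw by blast
  qed
  have ch': "inv_chan Byz ?g'" unfolding inv_chan_def chan_ok_def
  proof (intro allI impI)
    fix s0 d assume h: "s0 \<notin> Byz" "d \<notin> Byz"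
    show "chan_ok' (chan ?g' (Srv s0) (Srv d)) (proposed (srv ?g' s0) s0) (proposed (srv ?g' d) s0) (forwarded (srv ?g' s0))"
      apply (rule chan_ok'_pres2[where P = "proposed (srv g s0) s0" and Pd = "proposed (srv g d) s0" and F = "forwarded (srv g s0)"
            and ch = "chan g (Srv s0) (Srv d)" and app = "if s0 = s then outs (Srv d) else []"])
      subgoal using i(3) h unfolding inv_chan_def chan_ok_def by blast
      subgoal using ch[of "Srv s0" "Srv d"] assms(3) by auto
      subgoal using prp by auto
      subgoal using prp by auto
      subgoal using GD(6)[OF h(1)] by auto
      subgoal using prp by auto
      subgoal using prp by auto
      subgoal using OU sv F prp unfolding boring_def by (auto split: if_splits)
      done
  qed
  have cw: "inv_cw Byz ?g'"
  proof (rule inv_cw_pres2[OF i(4) i(2) G])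
    fix a T' s1 assume h: "a \<notin> Byz" "s1 \<notin> Byz" "s1 \<in> ConfirmWitness (srv ?g' a) T'" "s1 \<notin> ConfirmWitness (srv g a) T'"
    have e: "a = s" "T' = T" "x = Srv s1" using h sv F by (auto split: if_splits node.splits)
    have co: "chan_ok g s1 s" using i(3) h(2) assms(2) unfolding inv_chan_def by blast
    have "chan g (Srv s1) (Srv s) ! 0 = Confirm T t" "0 < length (chan g (Srv s1) (Srv s))" using assms(3) e by simp_all
    note co2 = conjunct2[OF co[unfolded chan_ok_def chan_ok'_def], rule_format]
    have r: "(T, t) \<in> forwarded (srv g s1) \<and>
        (\<forall>T2 k. (T2, k) \<in> proposed (srv g s1) s1 \<longrightarrow> k < t \<longrightarrow> (T2, k) \<in> proposed (srv g s) s1 \<or> Proposed T2 k \<in> set (take 0 (chan g (Srv s1) (Srv s))))"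
      by (rule co2) fact+
    have r1: "(T, t) \<in> forwarded (srv ?g' s1)" using r GD(6)[OF h(2)] by blast
    have r2: "\<forall>T2 k. (T2, k) \<in> proposed (srv ?g' s1) s1 \<longrightarrow> k < t \<longrightarrow> (T2, k) \<in> proposed (srv ?g' a) s1"
      unfolding prp e(1) using r by simp
    show "\<exists>t. (T', t) \<in> forwarded (srv ?g' s1) \<and>
        (\<forall>T2 k. (T2, k) \<in> proposed (srv ?g' s1) s1 \<longrightarrow> k < t \<longrightarrow> (T2, k) \<in> proposed (srv ?g' a) s1)"
      unfolding e(2) using r1 r2 by blast
  qed
  have pd: "inv_pend f Byz ?g'"
  proof (rule inv_pend_pres2[OF i(5) i(2) G])
    fix a t' assume h: "a \<notin> Byz" "pending (srv ?g' a) t' \<noteq> {}" "pending (srv g a) t' = {}"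
    have e: "a = s" "t' = t" using h sv PE by (auto split: if_splits)
    have pe: "pending st' t = {T'. \<exists>s'\<in>ConfirmWitness st' T. \<exists>k\<le>t. (T', k) \<in> proposed (srv g s) s'}"
      "card (ConfirmWitness st' T) = ?q" using PE2 h e sv by auto
    show "\<exists>W. card W \<ge> card (UNIV :: 's set) - f \<and> (\<forall>s\<in>W. s \<notin> Byz \<longrightarrow>
        (\<exists>T. (T, t') \<in> forwarded (srv ?g' s)) \<and>
        (\<forall>T2 k. (T2, k) \<in> proposed (srv ?g' s) s \<longrightarrow> k < t' \<longrightarrow> T2 \<in> pending (srv ?g' a) t'))"
    proof (rule exI[where x = "ConfirmWitness st' T"], intro conjI ballI impI allI)
      show "card (ConfirmWitness st' T) \<ge> ?q" using pe(2) by simp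
      fix s1 assume s1: "s1 \<in> ConfirmWitness st' T" "s1 \<notin> Byz"
      then have "s1 \<in> ConfirmWitness (srv ?g' s) T" using sv by simp
      then obtain t0 where t0: "(T, t0) \<in> forwarded (srv ?g' s1)"
        "\<forall>T2 k. (T2, k) \<in> proposed (srv ?g' s1) s1 \<longrightarrow> k < t0 \<longrightarrow> (T2, k) \<in> proposed (srv ?g' s) s1"
        using cw s1(2) assms(2) unfolding inv_cw_def by blast
      have "(T, t0) \<in> signed ?g'" using inv_confD(3)[OF c' s1(2) t0(1)] .
      then have "t0 = t" using inv_sigD(1)[OF s'] sT sg by blast
      then show "\<exists>T. (T, t') \<in> forwarded (srv ?g' s1)" using t0(1) e by blast
      fix T2 k assume "(T2, k) \<in> proposed (srv ?g' s1) s1" "k < t'"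
      then have "(T2, k) \<in> proposed (srv g s) s1" using t0(2) \<open>t0 = t\<close> e prp by auto
      moreover have "k \<le> t" using \<open>k < t'\<close> e by simp
      ultimately have "T2 \<in> {T'. \<exists>s'\<in>ConfirmWitness st' T. \<exists>k\<le>t. (T', k) \<in> proposed (srv g s) s'}"
        using s1(1) by blast
      then show "T2 \<in> pending (srv ?g' a) t'" using pe(1) e sv by simp
    qed
  qed
  have lg: "inv_log f Byz rs ws ?g'" by (rule inv_log_pres[OF i(6) G]) (simp add: oth)
  show ?thesis unfolding invs_def using s' c' ch' cw pd lg by simp
qed


lemma on_startres_facts:
  "proposed (fst (on_startres f s1 T c st)) = proposed st"
  "clock (fst (on_startres f s1 T c st)) = clock st"
  "confirmed (fst (on_startres f s1 T c st)) = confirmed st"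
  "forwarded (fst (on_startres f s1 T c st)) = forwarded st"
  "ConfirmWitness (fst (on_startres f s1 T c st)) = ConfirmWitness st"
  "pending (fst (on_startres f s1 T c st)) = pending st"
  "cancelled (fst (on_startres f s1 T c st)) = cancelled st"
  "log (fst (on_startres f s1 T c st)) = log st"
  unfolding on_startres_def Let_def
  by (simp_all split: code.splits)

lemma on_startres_outs:
  "m \<in> set (fst (snd (on_startres f s1 T c st)) z) \<Longrightarrow> boring m"
  unfolding on_startres_def Let_def
  by (auto simp: boring_def to_servers_def no_out_def split: code.splits if_splits node.splits)

lemma invs_recv:
  fixes g :: "('s::finite, 'tx::linorder) gstate"
  assumes "invs f Byz rs ws g" "s \<notin> Byz" "chan g x (Srv s) = m # rest"
    "handle f (card (UNIV :: 's set) - f) s x m (srv g s) = (st', outs, ins)"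
  shows "invs f Byz rs ws (srv_step g s st' outs ins x rest)"
proof -
  have noop: "invs f Byz rs ws (srv_step g s st' outs ins x rest)"
    if "st' = srv g s" "outs = no_out" "\<forall>s0 T k. x = Srv s0 \<longrightarrow> m \<noteq> Proposed T k"
    by (rule invs_recv_boring[OF assms(1-3)]) (use that in \<open>simp_all add: no_out_def\<close>)
  show ?thesis
  proof (cases m)
    case (Propose T)
    show ?thesis
    proof (cases x)
      case (Cli T0)
      then show ?thesis using invs_on_propose[OF assms(1,2)] assms(3,4) Propose by (simp add: handle_def)
    next
      case (Srv s1)
      then show ?thesis using noop assms(4) Propose by (simp add: handle_def)
    qed
  next
    case (ProposeAck T k)
    then show ?thesis using noop assms(4) by (simp add: handle_def)
  next
    case (Proposed T k)
    show ?thesis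
    proof (cases x)
      case (Cli T0)
      then show ?thesis using noop assms(4) Proposed by (simp add: handle_def)
    next
      case (Srv s1)
      then show ?thesis using invs_on_proposed[OF assms(1,2)] assms(3,4) Proposed by (simp add: handle_def)
    qed
  next
    case (Confirm T t)
    then show ?thesis using invs_on_confirm[OF assms(1,2)] assms(3,4) by (simp add: handle_def)
  next
    case (StartResolution T c)
    show ?thesis
    proof (cases x)
      case (Cli T0)
      then show ?thesis using noop assms(4) StartResolution by (simp add: handle_def)
    next
      case (Srv s1)
      have e: "on_startres f s1 T c (srv g s) = (st', outs, ins)" using assms(4) Srv StartResolution by (simp add: handle_def)
      have stE: "st' = fst (on_startres f s1 T c (srv g s))" and outE: "outs = fst (snd (on_startres f s1 T c (srv g s)))"
        using e by simp_all
      show ?thesis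
        by (rule invs_recv_boring[OF assms(1-3)])
           (use StartResolution on_startres_outs[of _ f s1 T c "srv g s"] on_startres_facts[of f s1 T c "srv g s"] stE outE in auto)
    qed
  qed
qed


lemma invs_step:
  assumes "step f Byz rs ws g g'" "invs f Byz rs ws g"
  shows "invs f Byz rs ws g'"
  using assms(1)
proof (cases rule: step.cases)
  case (recv s x m rest st' outs ins)
  then show ?thesis using invs_recv[OF assms(2)] by blast
next
  case (timer s t ts)
  then show ?thesis using invs_timer[OF assms(2)] by blast
next
  case (decide s T c)
  then show ?thesis using invs_decide[OF assms(2)] by blast
next
  case (apply_tx s T t)
  then show ?thesis using invs_apply[OF assms(2)] by blast
next
  case (cancel_tx s T)
  then show ?thesis using invs_cancel[OF assms(2)] by blast
next
  case (byz b m y)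
  then show ?thesis using invs_byz[OF assms(2)] by blast
next
  case (cli_propose T S)
  then show ?thesis using invs_cli_propose[OF assms(2)] by blast
next
  case (cli_recv x T m rest ph')
  then show ?thesis using invs_cli_recv[OF assms(2)] by blast
next
  case (cli_confirm T acks th S)
  then show ?thesis using invs_cli_confirm[OF assms(2)] by blast
next
  case (cli_crash T)
  then show ?thesis using invs_cli_crash[OF assms(2)] by blast
qed

lemma invs_reach:
  assumes "g \<in> reach f Byz rs ws"
  shows "invs f Byz rs ws g"
  using assms
proof (induction rule: reach.induct)
  case init
  then show ?case by (rule invs_init)
next
  case (step g g')
  then show ?case using invs_step by blast
qed

theorem lemma5:
  fixes f :: nat and Byz :: "'s::finite set"
    and rs ws :: "'tx::linorder \<Rightarrow> 'k set"
    and g :: "('s, 'tx) gstate" and a b :: 's and T1 T2 :: 'tx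
  assumes "card (UNIV :: 's set) = 4 * f + 1"
    and "card Byz \<le> f"
    and "g \<in> reach f Byz rs ws"
    and "a \<notin> Byz" and "b \<notin> Byz"
    and "conflict rs ws T1 T2"
    and "T1 \<notin> cancelled (srv g a)" and "T2 \<notin> cancelled (srv g a)"
    and "T1 \<notin> cancelled (srv g b)" and "T2 \<notin> cancelled (srv g b)"
    and "applied (log (srv g a)) T1" and "applied (log (srv g a)) T2"
    and "applied (log (srv g b)) T1" and "applied (log (srv g b)) T2"
  shows "applied_before (log (srv g a)) T1 T2 \<longleftrightarrow> applied_before (log (srv g b)) T1 T2"
  by (rule final_from_invs[OF assms(1,2) invs_reach[OF assms(3)] assms(4-14)])


end
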